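(* Let $\Lambda=\{z:\operatorname{Im}z>0\}$. For an integer $n\ge0$ let $\Omega_n=\{(p,q)\in\mathbb Z^2: 0\le p\le n,\ 0\le q\le n,\ (p,q)\ne(n,n)\}$, let $\mathcal A_n$ be the complex linear span of the functions $\frac{z^p\,\overline z^{\,q}}{(z-\overline z)^n}$, $(p,q)\in\Omega_n$, and $\mathcal A=\sum_{n\ge0}\mathcal A_n$. Let $\mathcal B$ be the space of all differential operators on $\Lambda$ that are finite sums of the form $$\sum_{\alpha,\beta,\gamma,\alpha',\beta',\gamma'\ge0}V_{\alpha,\beta,\gamma,\alpha',\beta',\gamma'}(z,\overline z)\Bigl(z^2\tfrac{\partial}{\partial z}\Bigr)^{\alpha}\Bigl(z\tfrac{\partial}{\partial z}\Bigr)^{\beta}\Bigl(\tfrac{\partial}{\partial z}\Bigr)^{\gamma}\Bigl(\overline z^{\,2}\tfrac{\partial}{\partial \overline z}\Bigr)^{\alpha'}\Bigl(\overline z\tfrac{\partial}{\partial \overline z}\Bigr)^{\beta'}\Bigl(\tfrac{\partial}{\partial \overline z}\Bigr)^{\gamma'},$$ with coefficients $V_{\alpha,\beta,\gamma,\alpha',\beta',\gamma'}\in\mathcal A$ (acting as multiplication operators). Then $\mathcal B$ is a subalgebra of the algebra of all differential operators on $\Lambda$, and $\mathcal B$ is generated (as an algebra) by the operators $$\frac{1}{z-\overline z},\quad z^2\frac{\partial}{\partial z},\quad z\frac{\partial}{\partial z},\quad \frac{\partial}{\partial z},\quad \overline z^{\,2}\frac{\partial}{\partial\overline z},\quad \overline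 z\frac{\partial}{\partial\overline z},\quad \frac{\partial}{\partial\overline z}.$$
   Context: $\frac{\partial}{\partial z}$, $\frac{\partial}{\partial\overline z}$ are the Wirtinger derivatives on $\Lambda$; $\frac1{z-\overline z}$ denotes the operator of multiplication by this function. *)

theory Defs
  imports "HOL-Analysis.Analysis"
begin

text \<open>Operators act on functions complex \<Rightarrow> complex; only values on the
upper half plane matter. The Wirtinger derivatives are defined through the
(real) Frechet derivative.\<close>

type_synonym cfun = "complex \<Rightarrow> complex"
type_synonym dop = "cfun \<Rightarrow> cfun"

definition Lambda :: "complex set" where
  "Lambda = {z. Im z > 0}"

definition wz :: dop where
  "wz f = (\<lambda>z. (frechet_derivative f (at z) 1 - \<i> * frechet_derivative f (at z) \<i>) / 2)"

definition wzb :: dop where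
  "wzb f = (\<lambda>z. (frechet_derivative f (at z) 1 + \<i> * frechet_derivative f (at z) \<i>) / 2)"

fun wirt_iter :: "bool list \<Rightarrow> dop" where
  "wirt_iter [] f = f"
| "wirt_iter (b # bs) f = (if b then wz else wzb) (wirt_iter bs f)"

definition smooth_on_C :: "complex set \<Rightarrow> cfun \<Rightarrow> bool" where
  "smooth_on_C S f \<longleftrightarrow> (\<forall>ws. wirt_iter ws f differentiable_on S)"

definition op_eq :: "dop \<Rightarrow> dop \<Rightarrow> bool" where
  "op_eq L M \<longleftrightarrow> (\<forall>f. smooth_on_C Lambda f \<longrightarrow> (\<forall>z\<in>Lambda. L f z = M f z))"

definition Omega :: "nat \<Rightarrow> (nat \<times> nat) set" where
  "Omega n = {(p, q). p \<le> n \<and> q \<le> n \<and> (p, q) \<noteq> (n, n)}"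

definition A_n :: "nat \<Rightarrow> cfun set" where
  "A_n n = {V. \<exists>c :: nat \<times> nat \<Rightarrow> complex.
       V = (\<lambda>z. \<Sum>(p, q)\<in>Omega n. c (p, q) * z ^ p * cnj z ^ q / (z - cnj z) ^ n)}"

definition A_all :: "cfun set" where
  "A_all = {V. \<exists>N Vs. (\<forall>n\<le>N. Vs n \<in> A_n n) \<and> V = (\<lambda>z. \<Sum>n\<le>N. Vs n z)}"

definition mult_op :: "cfun \<Rightarrow> dop" where
  "mult_op V f = (\<lambda>z. V z * f z)"

definition D1 :: dop where "D1 f = (\<lambda>z. z^2 * wz f z)"
definition D2 :: dop where "D2 f = (\<lambda>z. z * wz f z)"
definition D3 :: dop where "D3 f = wz f"
definition E1 :: dop where "E1 f = (\<lambda>z. (cnj z)^2 * wzb f z)"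
definition E2 :: dop where "E2 f = (\<lambda>z. cnj z * wzb f z)"
definition E3 :: dop where "E3 f = wzb f"

definition inv_diff :: dop where
  "inv_diff = mult_op (\<lambda>z. 1 / (z - cnj z))"

definition mono_op :: "nat \<times> nat \<times> nat \<times> nat \<times> nat \<times> nat \<Rightarrow> dop" where
  "mono_op t f = (case t of (a, b, c, a', b', c') \<Rightarrow>
     (D1 ^^ a) ((D2 ^^ b) ((D3 ^^ c) ((E1 ^^ a') ((E2 ^^ b') ((E3 ^^ c') f))))))"

definition B_ops :: "dop set" where
  "B_ops = {L. \<exists>S V. finite S \<and> (\<forall>t\<in>S. V t \<in> A_all) \<and>
      op_eq L (\<lambda>f z. \<Sum>t\<in>S. V t z * mono_op t f z)}"

definition op_add :: "dop \<Rightarrow> dop \<Rightarrow> dop" where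
  "op_add L M f = (\<lambda>z. L f z + M f z)"

definition op_scale :: "complex \<Rightarrow> dop \<Rightarrow> dop" where
  "op_scale c L f = (\<lambda>z. c * L f z)"

definition op_comp :: "dop \<Rightarrow> dop \<Rightarrow> dop" where
  "op_comp L M f = L (M f)"

inductive_set gen_alg :: "dop set \<Rightarrow> dop set" for G where
  gen_id: "(\<lambda>f. f) \<in> gen_alg G"
| gen_base: "g \<in> G \<Longrightarrow> g \<in> gen_alg G"
| gen_add: "L \<in> gen_alg G \<Longrightarrow> M \<in> gen_alg G \<Longrightarrow> op_add L M \<in> gen_alg G"
| gen_scale: "L \<in> gen_alg G \<Longrightarrow> op_scale c L \<in> gen_alg G"
| gen_comp: "L \<in> gen_alg G \<Longrightarrow> M \<in> gen_alg G \<Longrightarrow> op_comp L M \<in> gen_alg G"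

end

theory Submission
  imports Defs
begin


lemma open_Lambda: "open Lambda"
  unfolding Lambda_def by (rule open_halfspace_Im_gt)

lemma frechet_local:
  assumes "open S" "z \<in> S" "\<And>w. w \<in> S \<Longrightarrow> f w = g w"
  shows "frechet_derivative f (at z) = frechet_derivative g (at z)"
proof -
  have "\<And>D. (f has_derivative D) (at z) \<longleftrightarrow> (g has_derivative D) (at z)"
  proof
    fix D assume "(f has_derivative D) (at z)"
    thus "(g has_derivative D) (at z)"
      by (rule has_derivative_transform_within_open[OF _ assms(1,2)]) (use assms(3) in auto)
  next
    fix D assume "(g has_derivative D) (at z)"
    thus "(f has_derivative D) (at z)"
      by (rule has_derivative_transform_within_open[OF _ assms(1,2)]) (use assms(3) in auto)
  qed
  thus ?thesis unfolding frechet_derivative_def by simp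
qed

lemma wz_local: "open S \<Longrightarrow> z \<in> S \<Longrightarrow> (\<And>w. w \<in> S \<Longrightarrow> f w = g w) \<Longrightarrow> wz f z = wz g z"
  unfolding wz_def using frechet_local[of S z f g] by simp
lemma wzb_local: "open S \<Longrightarrow> z \<in> S \<Longrightarrow> (\<And>w. w \<in> S \<Longrightarrow> f w = g w) \<Longrightarrow> wzb f z = wzb g z"
  unfolding wzb_def using frechet_local[of S z f g] by simp

lemma real_lin_form:
  assumes "linear D"
  shows "D h = (D 1 - \<i> * D \<i>) / 2 * h + (D 1 + \<i> * D \<i>) / 2 * cnj h"
proof -
  have h: "h = Re h *\<^sub>R 1 + Im h *\<^sub>R \<i>" by (simp add: complex_eq_iff)
  have "D h = Re h *\<^sub>R D 1 + Im h *\<^sub>R D \<i>"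
    by (subst h) (simp only: linear_add[OF assms] linear_scale[OF assms])
  also have "\<dots> = (D 1 - \<i> * D \<i>) / 2 * h + (D 1 + \<i> * D \<i>) / 2 * cnj h"
    by (subst (3 4) h[simplified scaleR_conv_of_real]) (simp add: scaleR_conv_of_real algebra_simps field_simps)
  finally show ?thesis .
qed

lemma wirt_deriv:
  assumes "f differentiable (at z)"
  shows "(f has_derivative (\<lambda>h. wz f z * h + wzb f z * cnj h)) (at z)"
proof -
  let ?D = "frechet_derivative f (at z)"
  have d: "(f has_derivative ?D) (at z)" using assms frechet_derivative_works by blast
  have "linear ?D" using d has_derivative_linear by blast
  hence "?D = (\<lambda>h. wz f z * h + wzb f z * cnj h)"
    unfolding wz_def wzb_def by (intro ext, subst real_lin_form) auto
  thus ?thesis using d by simp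
qed

lemma wirt_eq:
  assumes "(f has_derivative (\<lambda>h. A * h + B * cnj h)) (at z)"
  shows "wz f z = A" "wzb f z = B"
  using frechet_derivative_at[OF assms, symmetric]
  by (simp_all add: wz_def wzb_def algebra_simps field_simps)


lemma wirt_eq2:
  assumes "(f has_derivative D) (at z)" "\<And>h. D h = A * h + B * cnj h"
  shows "wz f z = A \<and> wzb f z = B"
proof -
  have "D = (\<lambda>h. A*h + B*cnj h)" using assms(2) by auto
  thus ?thesis using wirt_eq[of f A B z] assms(1) by simp
qed

lemma wz_const[simp]: "wz (\<lambda>_. c) z = 0" and wzb_const[simp]: "wzb (\<lambda>_. c) z = 0"
  using wirt_eq2[OF has_derivative_const, of 0 0] by auto

lemma wz_id[simp]: "wz (\<lambda>w. w) z = 1" and wzb_id[simp]: "wzb (\<lambda>w. w) z = 0"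
  using wirt_eq2[OF has_derivative_ident, of 1 0] by auto

lemma wz_cnj[simp]: "wz cnj z = 0" and wzb_cnj[simp]: "wzb cnj z = 1"
proof -
  have "(cnj has_derivative cnj) (at z)"
    using has_derivative_cnj[OF has_derivative_ident] by simp
  from wirt_eq2[OF this, of 0 1] show "wz cnj z = 0" "wzb cnj z = 1" by auto
qed

lemma wirt_add:
  assumes f: "f differentiable (at z)" and g: "g differentiable (at z)"
  shows "wz (\<lambda>w. f w + g w) z = wz f z + wz g z"
    and "wzb (\<lambda>w. f w + g w) z = wzb f z + wzb g z"
  using wirt_eq2[OF has_derivative_add[OF wirt_deriv[OF f] wirt_deriv[OF g]],
      of "wz f z + wz g z" "wzb f z + wzb g z"]
  by (auto simp: algebra_simps)

lemma wirt_mult: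
  assumes f: "f differentiable (at z)" and g: "g differentiable (at z)"
  shows "wz (\<lambda>w. f w * g w) z = wz f z * g z + f z * wz g z"
    and "wzb (\<lambda>w. f w * g w) z = wzb f z * g z + f z * wzb g z"
  using wirt_eq2[OF has_derivative_mult[OF wirt_deriv[OF f] wirt_deriv[OF g]],
      of "wz f z * g z + f z * wz g z" "wzb f z * g z + f z * wzb g z"]
  by (auto simp: algebra_simps)

lemma wirt_cmult:
  assumes f: "f differentiable (at z)"
  shows "wz (\<lambda>w. c * f w) z = c * wz f z"
    and "wzb (\<lambda>w. c * f w) z = c * wzb f z"
  using wirt_mult[OF differentiable_const f, of c] by auto

lemma wirt_sum:
  assumes "\<And>i. i \<in> I \<Longrightarrow> f i differentiable (at z)"
  shows "wz (\<lambda>w. \<Sum>i\<in>I. f i w) z = (\<Sum>i\<in>I. wz (f i) z)"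
    and "wzb (\<lambda>w. \<Sum>i\<in>I. f i w) z = (\<Sum>i\<in>I. wzb (f i) z)"
  using wirt_eq2[OF has_derivative_sum[of I f "\<lambda>i h. wz (f i) z * h + wzb (f i) z * cnj h"],
        OF wirt_deriv[OF assms], of "\<Sum>i\<in>I. wz (f i) z" "\<Sum>i\<in>I. wzb (f i) z"]
  by (auto simp: sum.distrib sum_distrib_right)

definition uu :: cfun where "uu w = 1 / (w - cnj w)"

lemma Lambda_ne: "z \<in> Lambda \<Longrightarrow> z - cnj z \<noteq> 0"
  by (auto simp: Lambda_def complex_eq_iff)

lemma uu_deriv:
  assumes "z - cnj z \<noteq> 0"
  shows "(uu has_derivative (\<lambda>h. - (uu z ^ 2) * h + (uu z ^ 2) * cnj h)) (at z)"
proof -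
  have d: "((\<lambda>w. w - cnj w) has_derivative (\<lambda>h. h - cnj h)) (at z)"
    by (intro derivative_intros) 
  have "((\<lambda>w. inverse (w - cnj w)) has_derivative
      (\<lambda>h. - (inverse (z - cnj z) * (h - cnj h) * inverse (z - cnj z)))) (at z)"
    by (rule Deriv.has_derivative_inverse[OF assms d])
  moreover have "uu = (\<lambda>w. inverse (w - cnj w))" by (auto simp: uu_def divide_inverse)
  ultimately show ?thesis
    by (simp add: uu_def divide_inverse power2_eq_square algebra_simps)
qed

lemma wirt_uu:
  assumes "z - cnj z \<noteq> 0"
  shows "wz uu z = - (uu z ^ 2)" "wzb uu z = (uu z ^ 2)"
  using wirt_eq2[OF uu_deriv[OF assms], of "- (uu z ^ 2)" "(uu z ^ 2)"] by auto

lemma uu_differentiable: "z \<in> Lambda \<Longrightarrow> uu differentiable (at z)"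
  using uu_deriv[OF Lambda_ne] differentiable_def by blast

lemma wirt_power:
  assumes f: "f differentiable (at z)"
  shows "wz (\<lambda>w. f w ^ n) z = of_nat n * f z ^ (n - 1) * wz f z"
    and "wzb (\<lambda>w. f w ^ n) z = of_nat n * f z ^ (n - 1) * wzb f z"
  using wirt_eq2[OF has_derivative_power[OF wirt_deriv[OF f], of n],
      of "of_nat n * f z ^ (n - 1) * wz f z" "of_nat n * f z ^ (n - 1) * wzb f z"]
  by (auto simp: algebra_simps)


fun Sm :: "nat \<Rightarrow> cfun \<Rightarrow> bool" where
  "Sm 0 f = (f differentiable_on Lambda)"
| "Sm (Suc n) f = (f differentiable_on Lambda \<and> Sm n (wz f) \<and> Sm n (wzb f))"

lemma wirt_iter_snoc: "wirt_iter (ws @ [b]) f = wirt_iter ws ((if b then wz else wzb) f)"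
  by (induction ws) auto

lemma Sm_iff: "Sm n f \<longleftrightarrow> (\<forall>ws. length ws \<le> n \<longrightarrow> wirt_iter ws f differentiable_on Lambda)"
proof (induction n arbitrary: f)
  case 0
  then show ?case by simp
next
  case (Suc n)
  show ?case
  proof
    assume H: "Sm (Suc n) f"
    show "\<forall>ws. length ws \<le> Suc n \<longrightarrow> wirt_iter ws f differentiable_on Lambda"
    proof (intro allI impI)
      fix ws :: "bool list" assume l: "length ws \<le> Suc n"
      show "wirt_iter ws f differentiable_on Lambda"
      proof (cases ws rule: rev_exhaust)
        case Nil thus ?thesis using H by simp
      next
        case (snoc ys b)
        with l have "length ys \<le> n" by simp
        have HH: "Sm n (wz f)" "Sm n (wzb f)" using H[unfolded Sm.simps(2)] by blast+
        have "Sm n ((if b then wz else wzb) f)" using HH by (cases b) (simp only: if_True if_False)+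
        hence "wirt_iter ys ((if b then wz else wzb) f) differentiable_on Lambda"
          using Suc.IH \<open>length ys \<le> n\<close> by blast
        thus ?thesis by (simp add: snoc wirt_iter_snoc)
      qed
    qed
  next
    assume H: "\<forall>ws. length ws \<le> Suc n \<longrightarrow> wirt_iter ws f differentiable_on Lambda"
    have a: "f differentiable_on Lambda" using H[rule_format, of "[]"] by simp
    have b: "Sm n (wz f)" unfolding Suc.IH
    proof (intro allI impI)
      fix ws :: "bool list" assume "length ws \<le> n"
      hence "length (ws @ [True]) \<le> Suc n" by simp
      hence "wirt_iter (ws @ [True]) f differentiable_on Lambda" using H by blast
      thus "wirt_iter ws (wz f) differentiable_on Lambda" by (simp add: wirt_iter_snoc)
    qed
    have c: "Sm n (wzb f)" unfolding Suc.IH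
    proof (intro allI impI)
      fix ws :: "bool list" assume "length ws \<le> n"
      hence "length (ws @ [False]) \<le> Suc n" by simp
      hence "wirt_iter (ws @ [False]) f differentiable_on Lambda" using H by blast
      thus "wirt_iter ws (wzb f) differentiable_on Lambda" by (simp add: wirt_iter_snoc)
    qed
    show "Sm (Suc n) f" using a b c by simp
  qed
qed

definition sm :: "cfun \<Rightarrow> bool" where "sm f \<longleftrightarrow> (\<forall>n. Sm n f)"

lemma smooth_iff_sm: "smooth_on_C Lambda f \<longleftrightarrow> sm f"
  unfolding smooth_on_C_def sm_def Sm_iff
proof
  assume "\<forall>ws. wirt_iter ws f differentiable_on Lambda"
  thus "\<forall>n ws. length ws \<le> n \<longrightarrow> wirt_iter ws f differentiable_on Lambda" by blast
next
  assume H: "\<forall>n ws. length ws \<le> n \<longrightarrow> wirt_iter ws f differentiable_on Lambda"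
  show "\<forall>ws. wirt_iter ws f differentiable_on Lambda"
  proof
    fix ws :: "bool list" show "wirt_iter ws f differentiable_on Lambda" using H by blast
  qed
qed

lemma Sm_diff_on: "Sm n f \<Longrightarrow> f differentiable_on Lambda"
  by (cases n) auto

lemma Sm_S: "Sm (Suc n) f \<longleftrightarrow> f differentiable_on Lambda \<and> Sm n (wz f) \<and> Sm n (wzb f)"
  by (rule Sm.simps(2))

lemma Sm_mono: "Sm (Suc n) f \<Longrightarrow> Sm n f"
proof (induction n arbitrary: f)
  case 0 thus ?case unfolding Sm_S Sm.simps(1) by blast
next
  case (Suc n)
  have "f differentiable_on Lambda" "Sm (Suc n) (wz f)" "Sm (Suc n) (wzb f)"
    using Suc.prems unfolding Sm_S[of "Suc n"] by blast+
  thus ?case using Suc.IH unfolding Sm_S[of n] by blast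
qed

lemma diff_on_Lambda: "f differentiable_on Lambda \<longleftrightarrow> (\<forall>z\<in>Lambda. f differentiable (at z))"
  using differentiable_on_eq_differentiable_at[OF open_Lambda] .

lemma diff_local:
  assumes "f differentiable (at z)" "z \<in> Lambda" "\<forall>w\<in>Lambda. f w = g w"
  shows "g differentiable (at z)"
proof -
  obtain D where "(f has_derivative D) (at z)" using assms(1) differentiable_def by blast
  hence "(g has_derivative D) (at z)"
    by (rule has_derivative_transform_within_open[OF _ open_Lambda assms(2)]) (use assms(3) in blast)
  thus ?thesis using differentiable_def by blast
qed

lemma diff_on_local:
  assumes "f differentiable_on Lambda" "\<And>w. w \<in> Lambda \<Longrightarrow> f w = g w"
  shows "g differentiable_on Lambda"
  unfolding diff_on_Lambda
proof
  fix z assume z: "z \<in> Lambda"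
  hence "f differentiable (at z)" using assms(1) unfolding diff_on_Lambda by blast
  have E: "\<forall>w\<in>Lambda. f w = g w" using assms(2) by blast
  show "g differentiable (at z)" by (rule diff_local[OF _ z E]) fact
qed

lemma wz_localL: "\<forall>w\<in>Lambda. f w = g w \<Longrightarrow> \<forall>w\<in>Lambda. wz f w = wz g w"
proof
  fix z assume H: "\<forall>w\<in>Lambda. f w = g w" and z: "z \<in> Lambda"
  show "wz f z = wz g z" by (rule wz_local[OF open_Lambda z]) (use H in blast)
qed

lemma wzb_localL: "\<forall>w\<in>Lambda. f w = g w \<Longrightarrow> \<forall>w\<in>Lambda. wzb f w = wzb g w"
proof
  fix z assume H: "\<forall>w\<in>Lambda. f w = g w" and z: "z \<in> Lambda"
  show "wzb f z = wzb g z" by (rule wzb_local[OF open_Lambda z]) (use H in blast)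
qed

lemma Sm_localL: "Sm n f \<Longrightarrow> \<forall>w\<in>Lambda. f w = g w \<Longrightarrow> Sm n g"
proof (induction n arbitrary: f g)
  case 0
  have "f differentiable_on Lambda" using 0(1) by simp
  hence "g differentiable_on Lambda" by (rule diff_on_local) (use 0(2) in blast)
  thus ?case by simp
next
  case (Suc n)
  have P: "f differentiable_on Lambda" "Sm n (wz f)" "Sm n (wzb f)"
    using Suc.prems(1) unfolding Sm_S by blast+
  have a: "g differentiable_on Lambda" by (rule diff_on_local[OF P(1)]) (use Suc.prems(2) in blast)
  have b: "Sm n (wz g)" using Suc.IH[OF P(2) wz_localL[OF Suc.prems(2)]] .
  have c: "Sm n (wzb g)" using Suc.IH[OF P(3) wzb_localL[OF Suc.prems(2)]] .
  show ?case using a b c unfolding Sm_S by blast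
qed

lemma Sm_local: "Sm n f \<Longrightarrow> (\<And>w. w \<in> Lambda \<Longrightarrow> f w = g w) \<Longrightarrow> Sm n g"
  using Sm_localL[of n f g] by blast

lemma Sm_add: "Sm n f \<Longrightarrow> Sm n g \<Longrightarrow> Sm n (\<lambda>w. f w + g w)"
proof (induction n arbitrary: f g)
  case 0
  then show ?case unfolding Sm.simps(1) by (rule differentiable_on_add)
next
  case (Suc n)
  have P: "f differentiable_on Lambda" "Sm n (wz f)" "Sm n (wzb f)"
    using Suc.prems(1) unfolding Sm_S by blast+
  have Q: "g differentiable_on Lambda" "Sm n (wz g)" "Sm n (wzb g)"
    using Suc.prems(2) unfolding Sm_S by blast+
  have df: "\<And>z. z \<in> Lambda \<Longrightarrow> f differentiable (at z)" using P(1) diff_on_Lambda by blast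
  have dg: "\<And>z. z \<in> Lambda \<Longrightarrow> g differentiable (at z)" using Q(1) diff_on_Lambda by blast
  have a: "(\<lambda>w. f w + g w) differentiable_on Lambda" using P(1) Q(1) by (rule differentiable_on_add)
  have b: "Sm n (wz (\<lambda>w. f w + g w))"
    by (rule Sm_local[OF Suc.IH[OF P(2) Q(2)]]) (simp add: wirt_add df dg)
  have c: "Sm n (wzb (\<lambda>w. f w + g w))"
    by (rule Sm_local[OF Suc.IH[OF P(3) Q(3)]]) (simp add: wirt_add df dg)
  show ?case using a b c unfolding Sm_S by blast
qed

lemma Sm_mult: "Sm n f \<Longrightarrow> Sm n g \<Longrightarrow> Sm n (\<lambda>w. f w * g w)"
proof (induction n arbitrary: f g)
  case 0
  then show ?case unfolding Sm.simps(1) by (rule differentiable_on_mult)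
next
  case (Suc n)
  have P: "f differentiable_on Lambda" "Sm n (wz f)" "Sm n (wzb f)"
    using Suc.prems(1) unfolding Sm_S by blast+
  have Q: "g differentiable_on Lambda" "Sm n (wz g)" "Sm n (wzb g)"
    using Suc.prems(2) unfolding Sm_S by blast+
  have fm: "Sm n f" "Sm n g" using Suc.prems Sm_mono by blast+
  have df: "\<And>z. z \<in> Lambda \<Longrightarrow> f differentiable (at z)" using P(1) diff_on_Lambda by blast
  have dg: "\<And>z. z \<in> Lambda \<Longrightarrow> g differentiable (at z)" using Q(1) diff_on_Lambda by blast
  have a: "(\<lambda>w. f w * g w) differentiable_on Lambda" using P(1) Q(1) by (rule differentiable_on_mult)
  have b: "Sm n (wz (\<lambda>w. f w * g w))"
    by (rule Sm_local[OF Sm_add[OF Suc.IH[OF P(2) fm(2)] Suc.IH[OF fm(1) Q(2)]]])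
       (simp add: wirt_mult df dg)
  have c: "Sm n (wzb (\<lambda>w. f w * g w))"
    by (rule Sm_local[OF Sm_add[OF Suc.IH[OF P(3) fm(2)] Suc.IH[OF fm(1) Q(3)]]])
       (simp add: wirt_mult df dg)
  show ?case using a b c unfolding Sm_S by blast
qed

lemma Sm_const: "Sm n (\<lambda>_. c)"
proof (induction n arbitrary: c)
  case 0 thus ?case by simp
next
  case (Suc n)
  have "wz (\<lambda>_. c) = (\<lambda>_. 0)" "wzb (\<lambda>_. c) = (\<lambda>_. 0)" by (rule ext, simp)+
  thus ?case using Suc[of 0] unfolding Sm_S by simp
qed

lemma Sm_id: "Sm n (\<lambda>w. w)"
proof (cases n)
  case 0 thus ?thesis by simp
next
  case (Suc m)
  have "wz (\<lambda>w. w) = (\<lambda>_. 1)" "wzb (\<lambda>w. w) = (\<lambda>_. 0)" by (rule ext, simp)+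
  thus ?thesis using Suc Sm_const[of m 1] Sm_const[of m 0] unfolding Sm_S by simp
qed

lemma cnj_diff_on: "cnj differentiable_on S"
proof -
  have "\<And>z. (cnj has_derivative cnj) (at z within S)"
    using has_derivative_cnj[OF has_derivative_ident] by simp
  thus ?thesis unfolding differentiable_on_def differentiable_def by blast
qed

lemma Sm_cnj: "Sm n cnj"
proof (cases n)
  case 0 thus ?thesis by (simp add: cnj_diff_on)
next
  case (Suc m)
  have "wz cnj = (\<lambda>_. 0)" "wzb cnj = (\<lambda>_. 1)" by (rule ext, simp)+
  thus ?thesis using Suc Sm_const[of m 1] Sm_const[of m 0] unfolding Sm_S by (simp add: cnj_diff_on)
qed

lemma Sm_uu: "Sm n uu"
proof (induction n)
  case 0 thus ?case using uu_differentiable by (simp add: diff_on_Lambda)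
next
  case (Suc n)
  have sq: "Sm n (\<lambda>w. uu w * uu w)" using Sm_mult[OF Suc Suc] .
  have b: "Sm n (wz uu)"
    by (rule Sm_local[OF Sm_mult[OF Sm_const[of n "-1"] sq]])
       (simp add: wirt_uu[OF Lambda_ne] power2_eq_square)
  have c: "Sm n (wzb uu)"
    by (rule Sm_local[OF sq]) (simp add: wirt_uu[OF Lambda_ne] power2_eq_square)
  have a: "uu differentiable_on Lambda" using uu_differentiable by (simp add: diff_on_Lambda)
  show ?case using a b c unfolding Sm_S by blast
qed

lemma sm_add: "sm f \<Longrightarrow> sm g \<Longrightarrow> sm (\<lambda>w. f w + g w)"
  unfolding sm_def using Sm_add by blast
lemma sm_mult: "sm f \<Longrightarrow> sm g \<Longrightarrow> sm (\<lambda>w. f w * g w)"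
  unfolding sm_def using Sm_mult by blast
lemma sm_local: "sm f \<Longrightarrow> (\<And>w. w \<in> Lambda \<Longrightarrow> f w = g w) \<Longrightarrow> sm g"
  unfolding sm_def using Sm_local by blast
lemma sm_const: "sm (\<lambda>_. c)" unfolding sm_def using Sm_const by blast
lemma sm_id: "sm (\<lambda>w. w)" unfolding sm_def using Sm_id by blast
lemma sm_cnj: "sm cnj" unfolding sm_def using Sm_cnj by blast
lemma sm_uu: "sm uu" unfolding sm_def using Sm_uu by blast
lemma sm_wz: "sm f \<Longrightarrow> sm (wz f)" unfolding sm_def
proof
  fix n assume "\<forall>n. Sm n f" hence "Sm (Suc n) f" by blast
  thus "Sm n (wz f)" by simp
qed
lemma sm_wzb: "sm f \<Longrightarrow> sm (wzb f)" unfolding sm_def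
proof
  fix n assume "\<forall>n. Sm n f" hence "Sm (Suc n) f" by blast
  thus "Sm n (wzb f)" by simp
qed
lemma sm_diff: "sm f \<Longrightarrow> z \<in> Lambda \<Longrightarrow> f differentiable (at z)"
  unfolding sm_def using Sm_diff_on diff_on_Lambda by blast
lemma sm_cmult: "sm f \<Longrightarrow> sm (\<lambda>w. c * f w)"
  using sm_mult[OF sm_const] .
lemma sm_diff_fun: "sm f \<Longrightarrow> sm g \<Longrightarrow> sm (\<lambda>w. f w - g w)"
  using sm_add[of f "\<lambda>w. -1 * g w"] sm_cmult[of g "-1"] by simp
lemma sm_power: "sm f \<Longrightarrow> sm (\<lambda>w. f w ^ k)"
proof (induction k)
  case 0 thus ?case using sm_const[of 1] by simp
next
  case (Suc k) thus ?case using sm_mult[OF Suc.prems Suc.IH[OF Suc.prems]] by simp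
qed
lemma sm_sum: "finite I \<Longrightarrow> (\<And>i. i \<in> I \<Longrightarrow> sm (f i)) \<Longrightarrow> sm (\<lambda>w. \<Sum>i\<in>I. f i w)"
proof (induction I rule: finite_induct)
  case empty thus ?case using sm_const[of 0] by simp
next
  case (insert x F)
  have "sm (\<lambda>w. f x w + (\<Sum>i\<in>F. f i w))"
    by (rule sm_add) (use insert in auto)
  thus ?case using insert(1,2) by simp
qed


lemma young_est:
  fixes f :: "complex \<Rightarrow> complex" and F :: "complex \<Rightarrow> complex \<Rightarrow> complex"
  assumes S: "open S" "z \<in> S"
    and fd: "\<And>w. w \<in> S \<Longrightarrow> (f has_derivative F w) (at w)"
    and gv: "((\<lambda>w. F w v) has_derivative G) (at z)"
    and nu: "norm u = 1" and nv: "norm v = 1" and e: "e > 0"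
  shows "\<exists>d>0. \<forall>t. 0 < t \<and> t < d \<longrightarrow>
    norm (f (z + t *\<^sub>R u + t *\<^sub>R v) - f (z + t *\<^sub>R v) - f (z + t *\<^sub>R u) + f z - (t^2) *\<^sub>R G u)
      \<le> 5 * e * t^2"
proof -
  have blG: "bounded_linear G" using gv has_derivative_bounded_linear by blast
  have linG: "linear G" using blG bounded_linear.linear by blast
  obtain d1 where d1: "d1 > 0" "\<forall>y. norm (y - z) < d1 \<longrightarrow> norm (F y v - F z v - G (y - z)) \<le> e * norm (y - z)"
    using gv e unfolding has_derivative_at_alt by blast
  obtain d2 where d2: "d2 > 0" "ball z d2 \<subseteq> S" using S open_contains_ball by blast
  define d where "d = min d1 d2 / 2"
  have dpos: "d > 0" using d1 d2 by (simp add: d_def)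
  show ?thesis
  proof (intro exI[of _ d] conjI allI impI)
    show "d > 0" by fact
    fix t :: real assume t: "0 < t \<and> t < d"
    define E where "E w = F (z + w) v - F z v - G w" for w
    have Eb: "norm (E w) \<le> e * norm w" if "norm w \<le> 2 * t" for w
    proof -
      have "norm w < d1" using that t unfolding d_def by linarith
      thus ?thesis using d1(2)[rule_format, of "z + w"] by (simp add: E_def)
    qed
    have inS: "z + w \<in> S" if "norm w \<le> 2 * t" for w
    proof -
      have "norm w < d2" using that t unfolding d_def by linarith
      hence "z + w \<in> ball z d2" by (simp add: dist_norm)
      thus ?thesis using d2(2) by blast
    qed
    have nrm: "norm (t *\<^sub>R u + \<tau> *\<^sub>R v) \<le> 2 * t" "norm (\<tau> *\<^sub>R v) \<le> 2 * t"
      if "\<tau> \<in> {0..t}" for \<tau>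
    proof -
      have "norm (t *\<^sub>R u + \<tau> *\<^sub>R v) \<le> norm (t *\<^sub>R u) + norm (\<tau> *\<^sub>R v)" by (rule norm_triangle_ineq)
      also have "\<dots> = t + \<tau>" using nu nv that t by simp
      finally show "norm (t *\<^sub>R u + \<tau> *\<^sub>R v) \<le> 2 * t" using that by simp
      show "norm (\<tau> *\<^sub>R v) \<le> 2 * t" using nv that t by simp
    qed
    have ntu: "norm (t *\<^sub>R u) \<le> 2 * t" using nu t by simp
    define \<psi> where "\<psi> \<tau> = f (z + (t *\<^sub>R u + \<tau> *\<^sub>R v)) - f (z + \<tau> *\<^sub>R v)" for \<tau>
    define \<psi>' where "\<psi>' \<tau> = F (z + (t *\<^sub>R u + \<tau> *\<^sub>R v)) v - F (z + \<tau> *\<^sub>R v) v" for \<tau>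
    have comp: "((\<lambda>\<tau>. f (z + (c + \<tau> *\<^sub>R v))) has_vector_derivative F (z + (c + \<tau> *\<^sub>R v)) v)
        (at \<tau> within {0..t})" if "z + (c + \<tau> *\<^sub>R v) \<in> S" for c \<tau>
    proof -
      have i: "((\<lambda>\<tau>. z + (c + \<tau> *\<^sub>R v)) has_derivative (\<lambda>s. s *\<^sub>R v)) (at \<tau> within {0..t})"
        by (intro derivative_eq_intros) auto
      have o: "(f has_derivative F (z + (c + \<tau> *\<^sub>R v))) (at (z + (c + \<tau> *\<^sub>R v)))"
        using fd that by blast
      have lin: "linear (F (z + (c + \<tau> *\<^sub>R v)))" using o has_derivative_linear by blast
      have "((\<lambda>\<tau>. f (z + (c + \<tau> *\<^sub>R v))) has_derivative (\<lambda>s. F (z + (c + \<tau> *\<^sub>R v)) (s *\<^sub>R v)))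
          (at \<tau> within {0..t})"
        using has_derivative_compose[OF i o] .
      thus ?thesis unfolding has_vector_derivative_def using linear_scale[OF lin] by simp
    qed
    have der: "(\<psi> has_vector_derivative \<psi>' \<tau>) (at \<tau> within {0..t})" if "\<tau> \<in> {0..t}" for \<tau>
    proof -
      have a: "z + (t *\<^sub>R u + \<tau> *\<^sub>R v) \<in> S" using inS nrm(1)[OF that] by blast
      have b: "z + (0 + \<tau> *\<^sub>R v) \<in> S" using inS nrm(2)[OF that] by simp
      show ?thesis
        using has_vector_derivative_diff[OF comp[OF a] comp[OF b]]
        unfolding \<psi>_def \<psi>'_def by simp
    qed
    have Bd: "norm (\<psi>' \<tau> - \<psi>' 0) \<le> 4 * e * t" if "\<tau> \<in> {0..t}" for \<tau>
    proof -
      have eq: "\<psi>' \<tau> - \<psi>' 0 = E (t *\<^sub>R u + \<tau> *\<^sub>R v) - E (\<tau> *\<^sub>R v) - E (t *\<^sub>R u)"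
        unfolding \<psi>'_def E_def using linear_add[OF linG, of "t *\<^sub>R u" "\<tau> *\<^sub>R v"] by simp
      have "norm (\<psi>' \<tau> - \<psi>' 0) \<le> norm (E (t *\<^sub>R u + \<tau> *\<^sub>R v)) + norm (E (\<tau> *\<^sub>R v)) + norm (E (t *\<^sub>R u))"
        unfolding eq by (rule order_trans[OF norm_triangle_ineq4], rule add_mono[OF norm_triangle_ineq4]) simp
      also have "\<dots> \<le> e * norm (t *\<^sub>R u + \<tau> *\<^sub>R v) + e * norm (\<tau> *\<^sub>R v) + e * norm (t *\<^sub>R u)"
        using Eb[OF nrm(1)[OF that]] Eb[OF nrm(2)[OF that]] Eb[OF ntu] by (intro add_mono)
      also have "\<dots> \<le> e * (2 * t) + e * t + e * t"
        using nrm[OF that] nu nv that e t by (intro add_mono mult_left_mono) auto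
      finally show ?thesis by (simp add: algebra_simps)
    qed
    have seg: "closed_segment 0 t \<subseteq> {0..t}" using t by (simp add: closed_segment_eq_real_ivl)
    have L: "norm (\<psi> t - \<psi> 0 - (t - 0) *\<^sub>R \<psi>' 0) \<le> norm (t - 0) * (4 * e * t)"
      by (rule vector_differentiable_bound_linearization[OF der seg Bd]) (use t in auto)
    have psi: "\<psi> t - \<psi> 0 = f (z + t *\<^sub>R u + t *\<^sub>R v) - f (z + t *\<^sub>R v) - f (z + t *\<^sub>R u) + f z"
      unfolding \<psi>_def by (simp add: algebra_simps)
    have psi0: "t *\<^sub>R \<psi>' 0 = t *\<^sub>R E (t *\<^sub>R u) + (t^2) *\<^sub>R G u"
      unfolding \<psi>'_def E_def using linear_scale[OF linG, of t u]
      by (simp add: algebra_simps power2_eq_square)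
    have En: "norm (t *\<^sub>R E (t *\<^sub>R u)) \<le> e * t^2"
    proof -
      have "norm (t *\<^sub>R E (t *\<^sub>R u)) = t * norm (E (t *\<^sub>R u))" using t by simp
      also have "\<dots> \<le> t * (e * norm (t *\<^sub>R u))" using Eb[OF ntu] t by (intro mult_left_mono) auto
      also have "\<dots> = e * t^2" using nu t by (simp add: power2_eq_square)
      finally show ?thesis .
    qed
    have "f (z + t *\<^sub>R u + t *\<^sub>R v) - f (z + t *\<^sub>R v) - f (z + t *\<^sub>R u) + f z - (t^2) *\<^sub>R G u
        = (\<psi> t - \<psi> 0 - (t - 0) *\<^sub>R \<psi>' 0) + t *\<^sub>R E (t *\<^sub>R u)"
      using psi psi0 by (simp add: algebra_simps)
    also have "norm \<dots> \<le> t * (4 * e * t) + e * t^2"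
      using L En t by (intro order_trans[OF norm_triangle_ineq] add_mono) auto
    also have "\<dots> = 5 * e * t^2" by (simp add: power2_eq_square algebra_simps)
    finally show "norm (f (z + t *\<^sub>R u + t *\<^sub>R v) - f (z + t *\<^sub>R v) - f (z + t *\<^sub>R u) + f z - (t^2) *\<^sub>R G u)
      \<le> 5 * e * t^2" .
  qed
qed

lemma young:
  fixes f :: "complex \<Rightarrow> complex" and F :: "complex \<Rightarrow> complex \<Rightarrow> complex"
  assumes S: "open S" "z \<in> S"
    and fd: "\<And>w. w \<in> S \<Longrightarrow> (f has_derivative F w) (at w)"
    and gx: "((\<lambda>w. F w 1) has_derivative Gx) (at z)"
    and gy: "((\<lambda>w. F w \<i>) has_derivative Gy) (at z)"
  shows "Gx \<i> = Gy 1"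
proof (rule ccontr)
  assume ne: "Gx \<i> \<noteq> Gy 1"
  define \<delta> where "\<delta> = norm (Gx \<i> - Gy 1)"
  have dp: "\<delta> > 0" using ne by (simp add: \<delta>_def)
  define e where "e = \<delta> / 20"
  have ep: "e > 0" using dp by (simp add: e_def)
  obtain d1 where d1: "d1 > 0" "\<forall>t. 0 < t \<and> t < d1 \<longrightarrow>
    norm (f (z + t *\<^sub>R 1 + t *\<^sub>R \<i>) - f (z + t *\<^sub>R \<i>) - f (z + t *\<^sub>R 1) + f z - (t^2) *\<^sub>R Gy 1)
      \<le> 5 * e * t^2"
    using young_est[OF S fd gy, of 1 e] ep by auto
  obtain d2 where d2: "d2 > 0" "\<forall>t. 0 < t \<and> t < d2 \<longrightarrow>
    norm (f (z + t *\<^sub>R \<i> + t *\<^sub>R 1) - f (z + t *\<^sub>R 1) - f (z + t *\<^sub>R \<i>) + f z - (t^2) *\<^sub>R Gx \<i>)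
      \<le> 5 * e * t^2"
    using young_est[OF S fd gx, of \<i> e] ep by auto
  define t where "t = min d1 d2 / 2"
  have t: "0 < t" "t < d1" "t < d2" using d1 d2 by (auto simp: t_def)
  define \<Delta> where "\<Delta> = f (z + t *\<^sub>R 1 + t *\<^sub>R \<i>) - f (z + t *\<^sub>R \<i>) - f (z + t *\<^sub>R 1) + f z"
  have A: "norm (\<Delta> - (t^2) *\<^sub>R Gy 1) \<le> 5 * e * t^2" using d1(2) t unfolding \<Delta>_def by blast
  have "norm (\<Delta> - (t^2) *\<^sub>R Gx \<i>) \<le> 5 * e * t^2" using d2(2) t unfolding \<Delta>_def
    by (simp add: algebra_simps)
  hence "norm ((t^2) *\<^sub>R (Gx \<i> - Gy 1)) \<le> 10 * e * t^2"
    using norm_triangle_ineq4[of "\<Delta> - (t^2) *\<^sub>R Gy 1" "\<Delta> - (t^2) *\<^sub>R Gx \<i>"] A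
    by (simp add: algebra_simps)
  moreover have "norm ((t^2) *\<^sub>R (Gx \<i> - Gy 1)) = t^2 * \<delta>" unfolding \<delta>_def by simp
  ultimately have "t^2 * \<delta> \<le> 10 * e * t^2" by linarith
  also have "10 * e * t^2 = t^2 * (\<delta> / 2)" by (simp add: e_def)
  finally have "t^2 * \<delta> \<le> t^2 * (\<delta> / 2)" .
  hence "\<delta> \<le> \<delta> / 2" using t by (simp add: mult_le_cancel_left)
  thus False using dp by simp
qed

lemma wirt_comm:
  assumes g: "sm g" and z: "z \<in> Lambda"
  shows "wz (wzb g) z = wzb (wz g) z"
proof -
  define P where "P = wz g"
  define Q where "Q = wzb g"
  define F where "F w = (\<lambda>h. P w * h + Q w * cnj h)" for w
  have fd: "(g has_derivative F w) (at w)" if "w \<in> Lambda" for w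
    unfolding F_def P_def Q_def by (rule wirt_deriv[OF sm_diff[OF g that]])
  have dP: "P differentiable (at z)" unfolding P_def by (rule sm_diff[OF sm_wz[OF g] z])
  have dQ: "Q differentiable (at z)" unfolding Q_def by (rule sm_diff[OF sm_wzb[OF g] z])
  have e1: "(\<lambda>w. F w 1) = (\<lambda>w. P w + Q w)" by (simp add: F_def)
  have e2: "(\<lambda>w. F w \<i>) = (\<lambda>w. \<i> * P w - \<i> * Q w)" by (simp add: F_def algebra_simps)
  have gx: "((\<lambda>w. F w 1) has_derivative
     (\<lambda>h. (wz P z * h + wzb P z * cnj h) + (wz Q z * h + wzb Q z * cnj h))) (at z)"
    unfolding e1 by (rule has_derivative_add[OF wirt_deriv[OF dP] wirt_deriv[OF dQ]])
  have gy: "((\<lambda>w. F w \<i>) has_derivative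
     (\<lambda>h. \<i> * (wz P z * h + wzb P z * cnj h) - \<i> * (wz Q z * h + wzb Q z * cnj h))) (at z)"
    unfolding e2 by (intro has_derivative_diff has_derivative_mult_right wirt_deriv dP dQ)
  have "(wz P z * \<i> + wzb P z * cnj \<i>) + (wz Q z * \<i> + wzb Q z * cnj \<i>)
      = \<i> * (wz P z * 1 + wzb P z * cnj 1) - \<i> * (wz Q z * 1 + wzb Q z * cnj 1)"
    using young[OF open_Lambda z fd gx gy] by simp
  hence "\<i> * (2 * wz Q z - 2 * wzb P z) = 0" by (simp add: algebra_simps)
  hence "wz Q z = wzb P z" by simp
  thus ?thesis unfolding P_def Q_def .
qed


definition m :: "nat \<Rightarrow> nat \<Rightarrow> nat \<Rightarrow> cfun" where
  "m p q n = (\<lambda>z. z ^ p * cnj z ^ q / (z - cnj z) ^ n)"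

lemma finite_Omega: "finite (Omega n)"
proof -
  have "Omega n \<subseteq> {..n} \<times> {..n}" by (auto simp: Omega_def)
  thus ?thesis using finite_subset by blast
qed

lemma A_n_iff: "V \<in> A_n n \<longleftrightarrow> (\<exists>c. V = (\<lambda>z. \<Sum>x\<in>Omega n. c x * m (fst x) (snd x) n z))"
proof -
  have "\<And>c. (\<lambda>z. \<Sum>(p, q)\<in>Omega n. c (p, q) * z ^ p * cnj z ^ q / (z - cnj z) ^ n)
      = (\<lambda>z. \<Sum>x\<in>Omega n. c x * m (fst x) (snd x) n z)"
    by (rule ext, rule sum.cong) (auto simp: m_def split_def)
  thus ?thesis unfolding A_n_def by simp
qed

lemma A_n_sum:
  assumes "finite I" "\<And>i. i \<in> I \<Longrightarrow> f i \<in> A_n n"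
  shows "(\<lambda>z. \<Sum>i\<in>I. f i z) \<in> A_n n"
  using assms
proof (induction I rule: finite_induct)
  case empty
  have eq: "(\<lambda>z. 0::complex) = (\<lambda>z. \<Sum>x\<in>Omega n. (\<lambda>_. 0) x * m (fst x) (snd x) n z)" by simp
  show ?case unfolding A_n_iff
    apply (rule exI[of _ "\<lambda>_. 0"])
    using eq by simp
next
  case (insert a F)
  obtain c where c: "f a = (\<lambda>z. \<Sum>x\<in>Omega n. c x * m (fst x) (snd x) n z)"
    using insert.prems[of a] unfolding A_n_iff by blast
  obtain c' where c': "(\<lambda>z. \<Sum>i\<in>F. f i z) = (\<lambda>z. \<Sum>x\<in>Omega n. c' x * m (fst x) (snd x) n z)"
    using insert.IH insert.prems unfolding A_n_iff by blast
  have "(\<lambda>z. \<Sum>i\<in>insert a F. f i z) = (\<lambda>z. f a z + (\<Sum>i\<in>F. f i z))"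
    using insert(1,2) by simp
  also have "\<dots> = (\<lambda>z. \<Sum>x\<in>Omega n. (\<lambda>x. c x + c' x) x * m (fst x) (snd x) n z)"
    using fun_cong[OF c] fun_cong[OF c'] by (simp add: sum.distrib algebra_simps)
  finally have eq: "(\<lambda>z. \<Sum>i\<in>insert a F. f i z) = (\<lambda>z. \<Sum>x\<in>Omega n. (\<lambda>x. c x + c' x) x * m (fst x) (snd x) n z)" .
  show ?case unfolding A_n_iff
    apply (rule exI[of _ "\<lambda>x. c x + c' x"])
    using eq by simp
qed

lemma A_n_single:
  assumes "x0 \<in> Omega n"
  shows "(\<lambda>z. a * m (fst x0) (snd x0) n z) \<in> A_n n"
proof -
  have "(\<lambda>z. \<Sum>x\<in>Omega n. (\<lambda>x. if x = x0 then a else 0) x * m (fst x) (snd x) n z)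
      = (\<lambda>z. a * m (fst x0) (snd x0) n z)"
  proof (rule ext)
    fix z
    have "(\<Sum>x\<in>Omega n. (if x = x0 then a else 0) * m (fst x) (snd x) n z)
        = (\<Sum>x\<in>Omega n. if x = x0 then a * m (fst x) (snd x) n z else 0)"
      by (rule sum.cong) auto
    also have "\<dots> = a * m (fst x0) (snd x0) n z" using assms finite_Omega by (simp add: sum.delta)
    finally show "(\<Sum>x\<in>Omega n. (\<lambda>x. if x = x0 then a else 0) x * m (fst x) (snd x) n z)
      = a * m (fst x0) (snd x0) n z" by simp
  qed
  thus ?thesis unfolding A_n_iff by (rule exI[of _ "\<lambda>x. if x = x0 then a else 0", OF sym])
qed

lemma A_n_zero: "(\<lambda>_. 0) \<in> A_n n"
proof -
  have "(\<lambda>z. \<Sum>i\<in>{}. (\<lambda>_. 0::complex) z) \<in> A_n n" by (rule A_n_sum) auto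
  thus ?thesis by simp
qed

lemma A_n_add: "V \<in> A_n n \<Longrightarrow> W \<in> A_n n \<Longrightarrow> (\<lambda>z. V z + W z) \<in> A_n n"
proof -
  assume a: "V \<in> A_n n" "W \<in> A_n n"
  have "(\<lambda>z. \<Sum>b\<in>{True, False}. (if b then V else W) z) \<in> A_n n" by (rule A_n_sum) (use a in auto)
  thus ?thesis by simp
qed

lemma A_all_of_A_n:
  assumes "V \<in> A_n k"
  shows "V \<in> A_all"
proof -
  define Vs where "Vs n = (if n = k then V else (\<lambda>_. 0))" for n
  have "\<forall>n\<le>k. Vs n \<in> A_n n"
  proof (intro allI impI)
    fix n assume "n \<le> k"
    show "Vs n \<in> A_n n"
    proof (cases "n = k")
      case True thus ?thesis using assms by (simp add: Vs_def)
    next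
      case False
      have "(\<lambda>z. \<Sum>i\<in>{}. (\<lambda>_. 0::complex) z) \<in> A_n n" by (rule A_n_sum) auto
      thus ?thesis using False by (simp add: Vs_def)
    qed
  qed
  moreover have "V = (\<lambda>z. \<Sum>n\<le>k. Vs n z)"
  proof (rule ext)
    fix z
    have "(\<Sum>n\<le>k. Vs n z) = (\<Sum>n\<le>k. if n = k then V z else 0)" by (rule sum.cong) (auto simp: Vs_def)
    also have "\<dots> = V z" by (simp add: sum.delta)
    finally show "V z = (\<Sum>n\<le>k. Vs n z)" by simp
  qed
  ultimately show ?thesis unfolding A_all_def by blast
qed

lemma A_all_zero: "(\<lambda>_. 0) \<in> A_all"
proof -
  have "(\<lambda>z. \<Sum>i\<in>{}. (\<lambda>_. 0::complex) z) \<in> A_n 0" by (rule A_n_sum) auto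
  thus ?thesis using A_all_of_A_n by simp
qed

lemma A_all_add:
  assumes "V \<in> A_all" "W \<in> A_all"
  shows "(\<lambda>z. V z + W z) \<in> A_all"
proof -
  obtain N Vs where V: "\<forall>n\<le>N. Vs n \<in> A_n n" "V = (\<lambda>z. \<Sum>n\<le>N. Vs n z)"
    using assms(1) unfolding A_all_def by blast
  obtain M Ws where W: "\<forall>n\<le>M. Ws n \<in> A_n n" "W = (\<lambda>z. \<Sum>n\<le>M. Ws n z)"
    using assms(2) unfolding A_all_def by blast
  define K where "K = max N M"
  define Us where "Us n = (\<lambda>z. (if n \<le> N then Vs n z else 0) + (if n \<le> M then Ws n z else 0))" for n
  have "\<forall>n\<le>K. Us n \<in> A_n n"
  proof (intro allI impI)
    fix n assume "n \<le> K"
    have v: "(\<lambda>z. if n \<le> N then Vs n z else 0) \<in> A_n n"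
      using V(1) A_n_zero by (cases "n \<le> N") auto
    have w: "(\<lambda>z. if n \<le> M then Ws n z else 0) \<in> A_n n"
      using W(1) A_n_zero by (cases "n \<le> M") auto
    have "Us n \<in> A_n n" unfolding Us_def by (rule A_n_add[OF v w])
    thus "Us n \<in> A_n n" .
  qed
  moreover have "(\<lambda>z. V z + W z) = (\<lambda>z. \<Sum>n\<le>K. Us n z)"
  proof (rule ext)
    fix z
    have a: "(\<Sum>n\<le>K. (if n \<le> N then Vs n z else 0)) = (\<Sum>n\<le>N. Vs n z)"
      by (subst sum.inter_filter[symmetric]) (auto simp: K_def intro!: sum.cong)
    have b: "(\<Sum>n\<le>K. (if n \<le> M then Ws n z else 0)) = (\<Sum>n\<le>M. Ws n z)"
      by (subst sum.inter_filter[symmetric]) (auto simp: K_def intro!: sum.cong)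
    show "V z + W z = (\<Sum>n\<le>K. Us n z)"
      unfolding Us_def sum.distrib a b V(2) W(2) by simp
  qed
  ultimately show ?thesis unfolding A_all_def by blast
qed

lemma A_all_sum:
  assumes "finite I" "\<And>i. i \<in> I \<Longrightarrow> f i \<in> A_all"
  shows "(\<lambda>z. \<Sum>i\<in>I. f i z) \<in> A_all"
  using assms
proof (induction I rule: finite_induct)
  case empty thus ?case using A_all_zero by simp
next
  case (insert a F)
  have "(\<lambda>z. f a z + (\<Sum>i\<in>F. f i z)) \<in> A_all"
    using A_all_add[of "f a" "\<lambda>z. \<Sum>i\<in>F. f i z"] insert by auto
  thus ?case using insert(1,2) by simp
qed

lemma A_all_An_sum:
  assumes "V \<in> A_all"
  obtains N c where "V = (\<lambda>z. \<Sum>n\<le>N. \<Sum>x\<in>Omega n. c n x * m (fst x) (snd x) n z)"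
proof -
  obtain N Vs where V: "\<forall>n\<le>N. Vs n \<in> A_n n" "V = (\<lambda>z. \<Sum>n\<le>N. Vs n z)"
    using assms(1) unfolding A_all_def by blast
  have "\<forall>n\<in>{..N}. \<exists>c. Vs n = (\<lambda>z. \<Sum>x\<in>Omega n. c x * m (fst x) (snd x) n z)"
    using V(1) unfolding A_n_iff by auto
  then obtain c where "\<forall>n\<in>{..N}. Vs n = (\<lambda>z. \<Sum>x\<in>Omega n. c n x * m (fst x) (snd x) n z)"
    by metis
  hence "V = (\<lambda>z. \<Sum>n\<le>N. \<Sum>x\<in>Omega n. c n x * m (fst x) (snd x) n z)"
    unfolding V(2) by (intro ext sum.cong) auto
  thus ?thesis using that by blast
qed

lemma m_mult: "m p q n z * m p' q' n' z = m (p + p') (q + q') (n + n') z"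
  by (simp add: m_def power_add)

lemma A_all_mult:
  assumes "V \<in> A_all" "W \<in> A_all"
  shows "(\<lambda>z. V z * W z) \<in> A_all"
proof -
  obtain N c where V: "V = (\<lambda>z. \<Sum>n\<le>N. \<Sum>x\<in>Omega n. c n x * m (fst x) (snd x) n z)"
    using A_all_An_sum[OF assms(1)] by blast
  obtain M d where W: "W = (\<lambda>z. \<Sum>n\<le>M. \<Sum>x\<in>Omega n. d n x * m (fst x) (snd x) n z)"
    using A_all_An_sum[OF assms(2)] by blast
  have "(\<lambda>z. V z * W z) = (\<lambda>z. \<Sum>n\<le>N. \<Sum>k\<le>M. \<Sum>x\<in>Omega n. \<Sum>y\<in>Omega k.
      (c n x * d k y) * m (fst x + fst y) (snd x + snd y) (n + k) z)"
    unfolding V W sum_product by (intro ext sum.cong refl) (simp add: m_mult[symmetric] mult_ac)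
  also have "\<dots> \<in> A_all"
  proof (intro A_all_sum finite_Omega finite_atMost)
    fix n k x y assume "n \<in> {..N}" "k \<in> {..M}" "x \<in> Omega n" "y \<in> Omega k"
    hence "(fst x + fst y, snd x + snd y) \<in> Omega (n + k)"
      by (auto simp: Omega_def split_def)
    hence "(\<lambda>z. (c n x * d k y) * m (fst (fst x + fst y, snd x + snd y)) (snd (fst x + fst y, snd x + snd y)) (n + k) z) \<in> A_n (n + k)"
      by (rule A_n_single)
    thus "(\<lambda>z. (c n x * d k y) * m (fst x + fst y) (snd x + snd y) (n + k) z) \<in> A_all"
      using A_all_of_A_n by simp
  qed
  finally show ?thesis .
qed

lemma A_all_const_mult:
  assumes "V \<in> A_all"
  shows "(\<lambda>z. a * V z) \<in> A_all"
proof -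
  obtain N c where V: "V = (\<lambda>z. \<Sum>n\<le>N. \<Sum>x\<in>Omega n. c n x * m (fst x) (snd x) n z)"
    using A_all_An_sum[OF assms(1)] by blast
  have "(\<lambda>z. a * V z) = (\<lambda>z. \<Sum>n\<le>N. \<Sum>x\<in>Omega n. (a * c n x) * m (fst x) (snd x) n z)"
    unfolding V by (simp add: sum_distrib_left algebra_simps)
  also have "\<dots> \<in> A_all"
  proof (intro A_all_sum finite_Omega finite_atMost)
    fix n x assume "n \<in> {..N}" "x \<in> Omega n"
    thus "(\<lambda>z. (a * c n x) * m (fst x) (snd x) n z) \<in> A_all"
      using A_n_single A_all_of_A_n by blast
  qed
  finally show ?thesis .
qed


definition AL :: "cfun \<Rightarrow> bool" where
  "AL V \<longleftrightarrow> (\<exists>W\<in>A_all. \<forall>z\<in>Lambda. V z = W z)"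

lemma AL_of_A_all: "W \<in> A_all \<Longrightarrow> AL W"
  unfolding AL_def by blast

lemma AL_local: "AL V \<Longrightarrow> \<forall>z\<in>Lambda. V z = V' z \<Longrightarrow> AL V'"
  unfolding AL_def by auto

lemma AL_zero: "AL (\<lambda>_. 0)"
  using AL_of_A_all[OF A_all_zero] .

lemma AL_add: "AL V \<Longrightarrow> AL W \<Longrightarrow> AL (\<lambda>z. V z + W z)"
proof -
  assume "AL V" "AL W"
  then obtain V' W' where "V' \<in> A_all" "W' \<in> A_all" "\<forall>z\<in>Lambda. V z = V' z" "\<forall>z\<in>Lambda. W z = W' z"
    unfolding AL_def by blast
  thus ?thesis unfolding AL_def using A_all_add by (intro bexI[of _ "\<lambda>z. V' z + W' z"]) auto
qed

lemma AL_mult: "AL V \<Longrightarrow> AL W \<Longrightarrow> AL (\<lambda>z. V z * W z)"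
proof -
  assume "AL V" "AL W"
  then obtain V' W' where "V' \<in> A_all" "W' \<in> A_all" "\<forall>z\<in>Lambda. V z = V' z" "\<forall>z\<in>Lambda. W z = W' z"
    unfolding AL_def by blast
  thus ?thesis unfolding AL_def using A_all_mult by (intro bexI[of _ "\<lambda>z. V' z * W' z"]) auto
qed

lemma AL_cmult: "AL V \<Longrightarrow> AL (\<lambda>z. a * V z)"
proof -
  assume "AL V"
  then obtain V' where "V' \<in> A_all" "\<forall>z\<in>Lambda. V z = V' z"
    unfolding AL_def by blast
  thus ?thesis unfolding AL_def using A_all_const_mult by (intro bexI[of _ "\<lambda>z. a * V' z"]) auto
qed

lemma AL_diff: "AL V \<Longrightarrow> AL W \<Longrightarrow> AL (\<lambda>z. V z - W z)"
  using AL_add[of V "\<lambda>z. (-1) * W z"] AL_cmult[of W "-1"] by simp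

lemma AL_sum: "finite I \<Longrightarrow> (\<And>i. i \<in> I \<Longrightarrow> AL (f i)) \<Longrightarrow> AL (\<lambda>z. \<Sum>i\<in>I. f i z)"
proof (induction I rule: finite_induct)
  case empty thus ?case using AL_zero by simp
next
  case (insert a F)
  have "AL (\<lambda>z. f a z + (\<Sum>i\<in>F. f i z))"
    using AL_add[of "f a" "\<lambda>z. \<Sum>i\<in>F. f i z"] insert by auto
  thus ?case using insert(1,2) by simp
qed

lemma AL_cm: "(a \<noteq> 0 \<Longrightarrow> (p, q) \<in> Omega n) \<Longrightarrow> AL (\<lambda>z. a * m p q n z)"
proof (cases "a = 0")
  case True thus ?thesis using AL_zero by simp
next
  case False
  assume "a \<noteq> 0 \<Longrightarrow> (p, q) \<in> Omega n"
  hence "(p, q) \<in> Omega n" using False by blast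
  from A_n_single[OF this, of a] show ?thesis using AL_of_A_all A_all_of_A_n by simp
qed

lemma AL_m: "(p, q) \<in> Omega n \<Longrightarrow> AL (m p q n)"
  using AL_cm[of 1 p q n] by simp

lemma AL_one: "AL (\<lambda>_. 1)"
proof -
  have "AL (\<lambda>z. m 1 0 1 z - m 0 1 1 z)"
    by (intro AL_diff AL_m) (auto simp: Omega_def)
  moreover have "\<forall>z\<in>Lambda. m 1 0 1 z - m 0 1 1 z = 1"
  proof
    fix z assume "z \<in> Lambda"
    hence ne: "z - cnj z \<noteq> 0" by (rule Lambda_ne)
    have "m 1 0 1 z - m 0 1 1 z = (z - cnj z) / (z - cnj z)"
      unfolding m_def by (simp only: power_one_right power_0 mult_1_left mult_1_right diff_divide_distrib)
    thus "m 1 0 1 z - m 0 1 1 z = 1" using ne by simp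
  qed
  ultimately show ?thesis using AL_local[of "\<lambda>z. m 1 0 1 z - m 0 1 1 z" "\<lambda>_. 1"] by simp
qed

lemma AL_const: "AL (\<lambda>_. a)"
  using AL_cmult[OF AL_one, of a] by simp

lemma uu_m: "uu = m 0 0 1"
  by (rule ext) (simp add: uu_def m_def)

lemma AL_uu: "AL uu"
  unfolding uu_m by (rule AL_m) (auto simp: Omega_def)

lemma m_eq: "m p q n = (\<lambda>w. w ^ p * cnj w ^ q * uu w ^ n)"
  by (rule ext) (simp add: m_def uu_def power_one_over)

lemma sm_m: "sm (m p q n)"
  unfolding m_eq by (intro sm_mult sm_power sm_id sm_cnj sm_uu)

lemma sm_A_all: "V \<in> A_all \<Longrightarrow> sm V"
proof -
  assume "V \<in> A_all"
  then obtain N c where V: "V = (\<lambda>z. \<Sum>n\<le>N. \<Sum>x\<in>Omega n. c n x * m (fst x) (snd x) n z)"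
    using A_all_An_sum by blast
  show ?thesis unfolding V by (intro sm_sum finite_atMost finite_Omega sm_cmult sm_m)
qed

lemma sm_AL: "AL V \<Longrightarrow> sm V"
  unfolding AL_def using sm_A_all sm_local by metis

lemma m_zmul: "z * m p q n z = m (Suc p) q n z"
  by (simp add: m_def)
lemma m_zbmul: "cnj z * m p q n z = m p (Suc q) n z"
  by (simp add: m_def)
lemma m_umul: "m p q n z * uu z = m p q (Suc n) z"
  by (simp add: m_def uu_def)

lemma m_shift: "z \<in> Lambda \<Longrightarrow> m p q n z = m (Suc p) q (Suc n) z - m p (Suc q) (Suc n) z"
proof -
  assume "z \<in> Lambda"
  hence ne: "z - cnj z \<noteq> 0" by (rule Lambda_ne)
  have "m (Suc p) q (Suc n) z - m p (Suc q) (Suc n) z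
      = (z ^ p * cnj z ^ q) * (z - cnj z) / ((z - cnj z) * (z - cnj z) ^ n)"
    by (simp add: m_def diff_divide_distrib[symmetric] algebra_simps)
  also have "\<dots> = m p q n z" using ne by (simp add: m_def)
  finally show ?thesis by simp
qed


lemma pow_shift: "of_nat n * (x::complex) ^ (n - 1) * x ^ 2 = of_nat n * x ^ Suc n"
  by (cases n) (simp_all add: power2_eq_square)

lemma diff_id: "(\<lambda>w. w) differentiable (at z)"
  using sm_diff[OF sm_id] by (metis differentiable_ident)
lemma diff_cnj: "cnj differentiable (at z)"
  using has_derivative_cnj[OF has_derivative_ident] differentiable_def by fastforce

lemma wirt_m:
  assumes z: "z \<in> Lambda"
  shows "wz (m p q n) z = of_nat p * m (p - 1) q n z - of_nat n * m p q (Suc n) z"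
    and "wzb (m p q n) z = of_nat q * m p (q - 1) n z + of_nat n * m p q (Suc n) z"
proof -
  have d1: "(\<lambda>w. w ^ p) differentiable (at z)" using sm_diff[OF sm_power[OF sm_id] z] .
  have d2: "(\<lambda>w. cnj w ^ q) differentiable (at z)" using sm_diff[OF sm_power[OF sm_cnj] z] .
  have d12: "(\<lambda>w. w ^ p * cnj w ^ q) differentiable (at z)"
    using sm_diff[OF sm_mult[OF sm_power[OF sm_id] sm_power[OF sm_cnj]] z] .
  have d3: "(\<lambda>w. uu w ^ n) differentiable (at z)" using sm_diff[OF sm_power[OF sm_uu] z] .
  have u: "uu differentiable (at z)" using uu_differentiable[OF z] .
  have ne: "z - cnj z \<noteq> 0" using Lambda_ne[OF z] .
  have A: "wz (\<lambda>w. w ^ p * cnj w ^ q) z = of_nat p * z ^ (p - 1) * cnj z ^ q"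
    using wirt_mult(1)[OF d1 d2] wirt_power(1)[OF diff_id, where n=p] wirt_power(1)[OF diff_cnj, where n=q]
    by simp
  have B: "wz (\<lambda>w. uu w ^ n) z = - (of_nat n * uu z ^ Suc n)"
    using wirt_power(1)[OF u, of n] wirt_uu(1)[OF ne] pow_shift[of n "uu z"] by simp
  have "wz (m p q n) z = wz (\<lambda>w. (w ^ p * cnj w ^ q) * uu w ^ n) z" unfolding m_eq by simp
  also have "\<dots> = of_nat p * z ^ (p - 1) * cnj z ^ q * uu z ^ n - of_nat n * z ^ p * cnj z ^ q * uu z ^ Suc n"
    using wirt_mult(1)[OF d12 d3] A B by (simp add: algebra_simps)
  also have "\<dots> = of_nat p * m (p - 1) q n z - of_nat n * m p q (Suc n) z"
    unfolding m_eq by (simp add: algebra_simps)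
  finally show "wz (m p q n) z = of_nat p * m (p - 1) q n z - of_nat n * m p q (Suc n) z" .
  have A': "wzb (\<lambda>w. w ^ p * cnj w ^ q) z = of_nat q * z ^ p * cnj z ^ (q - 1)"
    using wirt_mult(2)[OF d1 d2] wirt_power(2)[OF diff_id, where n=p] wirt_power(2)[OF diff_cnj, where n=q]
    by simp
  have B': "wzb (\<lambda>w. uu w ^ n) z = of_nat n * uu z ^ Suc n"
    using wirt_power(2)[OF u, of n] wirt_uu(2)[OF ne] pow_shift[of n "uu z"] by simp
  have "wzb (m p q n) z = wzb (\<lambda>w. (w ^ p * cnj w ^ q) * uu w ^ n) z" unfolding m_eq by simp
  also have "\<dots> = of_nat q * z ^ p * cnj z ^ (q - 1) * uu z ^ n + of_nat n * z ^ p * cnj z ^ q * uu z ^ Suc n"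
    using wirt_mult(2)[OF d12 d3] A' B' by (simp add: algebra_simps)
  also have "\<dots> = of_nat q * m p (q - 1) n z + of_nat n * m p q (Suc n) z"
    unfolding m_eq by (simp add: algebra_simps)
  finally show "wzb (m p q n) z = of_nat q * m p (q - 1) n z + of_nat n * m p q (Suc n) z" .
qed

definition dz :: "nat \<Rightarrow> cfun \<Rightarrow> cfun" where "dz k V = (\<lambda>z. z ^ k * wz V z)"
definition dzb :: "nat \<Rightarrow> cfun \<Rightarrow> cfun" where "dzb k V = (\<lambda>z. cnj z ^ k * wzb V z)"

lemma m_pred_z: "of_nat p * (z * m (p - 1) q n z) = of_nat p * m p q n z"
  by (cases p) (simp_all add: m_zmul)
lemma m_pred_zb: "of_nat q * (cnj z * m p (q - 1) n z) = of_nat q * m p q n z"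
  by (cases q) (simp_all add: m_zbmul)

lemma dz1_m: "z \<in> Lambda \<Longrightarrow> dz 1 (m p q n) z = of_nat p * m p q n z - of_nat n * m (Suc p) q (Suc n) z"
proof -
  assume z: "z \<in> Lambda"
  have "dz 1 (m p q n) z = z * (of_nat p * m (p - 1) q n z - of_nat n * m p q (Suc n) z)"
    by (simp add: dz_def wirt_m(1)[OF z])
  also have "\<dots> = of_nat p * (z * m (p - 1) q n z) - of_nat n * (z * m p q (Suc n) z)"
    by (simp add: algebra_simps)
  also have "\<dots> = of_nat p * m p q n z - of_nat n * m (Suc p) q (Suc n) z"
    unfolding m_pred_z by (simp only: m_zmul)
  finally show ?thesis .
qed

lemma dzb1_m: "z \<in> Lambda \<Longrightarrow> dzb 1 (m p q n) z = of_nat q * m p q n z + of_nat n * m p (Suc q) (Suc n) z"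
proof -
  assume z: "z \<in> Lambda"
  have "dzb 1 (m p q n) z = cnj z * (of_nat q * m p (q - 1) n z + of_nat n * m p q (Suc n) z)"
    by (simp add: dzb_def wirt_m(2)[OF z])
  also have "\<dots> = of_nat q * (cnj z * m p (q - 1) n z) + of_nat n * (cnj z * m p q (Suc n) z)"
    by (simp add: algebra_simps)
  also have "\<dots> = of_nat q * m p q n z + of_nat n * m p (Suc q) (Suc n) z"
    unfolding m_pred_zb by (simp only: m_zbmul)
  finally show ?thesis .
qed

lemma dz2_m: "z \<in> Lambda \<Longrightarrow> dz 2 (m p q n) z =
   (of_nat p - of_nat n) * m (Suc (Suc p)) q (Suc n) z - of_nat p * m (Suc p) (Suc q) (Suc n) z"
proof -
  assume z: "z \<in> Lambda"
  have "dz 2 (m p q n) z = z * dz 1 (m p q n) z" by (simp add: dz_def power2_eq_square)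
  also have "\<dots> = of_nat p * (z * m p q n z) - of_nat n * (z * m (Suc p) q (Suc n) z)"
    unfolding dz1_m[OF z] by (simp add: algebra_simps)
  also have "\<dots> = of_nat p * m (Suc p) q n z - of_nat n * m (Suc (Suc p)) q (Suc n) z"
    by (simp add: m_zmul)
  also have "\<dots> = (of_nat p - of_nat n) * m (Suc (Suc p)) q (Suc n) z - of_nat p * m (Suc p) (Suc q) (Suc n) z"
    unfolding m_shift[OF z, of "Suc p" q n] by (simp add: algebra_simps)
  finally show ?thesis .
qed

lemma dzb2_m: "z \<in> Lambda \<Longrightarrow> dzb 2 (m p q n) z =
   of_nat q * m (Suc p) (Suc q) (Suc n) z + (of_nat n - of_nat q) * m p (Suc (Suc q)) (Suc n) z"
proof -
  assume z: "z \<in> Lambda"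
  have "dzb 2 (m p q n) z = cnj z * dzb 1 (m p q n) z" by (simp add: dzb_def power2_eq_square)
  also have "\<dots> = of_nat q * (cnj z * m p q n z) + of_nat n * (cnj z * m p (Suc q) (Suc n) z)"
    unfolding dzb1_m[OF z] by (simp add: algebra_simps)
  also have "\<dots> = of_nat q * m p (Suc q) n z + of_nat n * m p (Suc (Suc q)) (Suc n) z"
    by (simp add: m_zbmul)
  also have "\<dots> = of_nat q * m (Suc p) (Suc q) (Suc n) z + (of_nat n - of_nat q) * m p (Suc (Suc q)) (Suc n) z"
    unfolding m_shift[OF z, of p "Suc q" n] by (simp add: algebra_simps)
  finally show ?thesis .
qed

lemma AL_dz_m:
  assumes "k \<le> 2" "(p, q) \<in> Omega n"
  shows "AL (dz k (m p q n))"
proof -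
  have pq: "p \<le> n" "q \<le> n" "(p, q) \<noteq> (n, n)" using assms(2) by (auto simp: Omega_def)
  consider "k = 0" | "k = 1" | "k = 2" using assms(1) by linarith
  thus ?thesis
  proof cases
    case 1
    have "AL (\<lambda>z. of_nat p * m (p - 1) q n z - of_nat n * m p q (Suc n) z)"
      by (intro AL_diff AL_cm) (use pq in \<open>auto simp: Omega_def\<close>)
    moreover have "\<forall>z\<in>Lambda. of_nat p * m (p - 1) q n z - of_nat n * m p q (Suc n) z = dz k (m p q n) z"
      using wirt_m(1) 1 by (simp add: dz_def)
    ultimately show ?thesis by (rule AL_local)
  next
    case 2
    have "AL (\<lambda>z. of_nat p * m p q n z - of_nat n * m (Suc p) q (Suc n) z)"
      by (intro AL_diff AL_cm) (use pq in \<open>auto simp: Omega_def\<close>)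
    moreover have "\<forall>z\<in>Lambda. of_nat p * m p q n z - of_nat n * m (Suc p) q (Suc n) z = dz k (m p q n) z"
      using dz1_m 2 by simp
    ultimately show ?thesis by (rule AL_local)
  next
    case 3
    have "AL (\<lambda>z. (of_nat p - of_nat n) * m (Suc (Suc p)) q (Suc n) z - of_nat p * m (Suc p) (Suc q) (Suc n) z)"
      by (intro AL_diff AL_cm) (use pq in \<open>auto simp: Omega_def\<close>)
    moreover have "\<forall>z\<in>Lambda. (of_nat p - of_nat n) * m (Suc (Suc p)) q (Suc n) z - of_nat p * m (Suc p) (Suc q) (Suc n) z = dz k (m p q n) z"
      using dz2_m 3 by simp
    ultimately show ?thesis by (rule AL_local)
  qed
qed

lemma AL_dzb_m:
  assumes "k \<le> 2" "(p, q) \<in> Omega n"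
  shows "AL (dzb k (m p q n))"
proof -
  have pq: "p \<le> n" "q \<le> n" "(p, q) \<noteq> (n, n)" using assms(2) by (auto simp: Omega_def)
  consider "k = 0" | "k = 1" | "k = 2" using assms(1) by linarith
  thus ?thesis
  proof cases
    case 1
    have "AL (\<lambda>z. of_nat q * m p (q - 1) n z + of_nat n * m p q (Suc n) z)"
      by (intro AL_add AL_cm) (use pq in \<open>auto simp: Omega_def\<close>)
    moreover have "\<forall>z\<in>Lambda. of_nat q * m p (q - 1) n z + of_nat n * m p q (Suc n) z = dzb k (m p q n) z"
      using wirt_m(2) 1 by (simp add: dzb_def)
    ultimately show ?thesis by (rule AL_local)
  next
    case 2
    have "AL (\<lambda>z. of_nat q * m p q n z + of_nat n * m p (Suc q) (Suc n) z)"
      by (intro AL_add AL_cm) (use pq in \<open>auto simp: Omega_def\<close>)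
    moreover have "\<forall>z\<in>Lambda. of_nat q * m p q n z + of_nat n * m p (Suc q) (Suc n) z = dzb k (m p q n) z"
      using dzb1_m 2 by simp
    ultimately show ?thesis by (rule AL_local)
  next
    case 3
    have "AL (\<lambda>z. of_nat q * m (Suc p) (Suc q) (Suc n) z + (of_nat n - of_nat q) * m p (Suc (Suc q)) (Suc n) z)"
      by (intro AL_add AL_cm) (use pq in \<open>auto simp: Omega_def\<close>)
    moreover have "\<forall>z\<in>Lambda. of_nat q * m (Suc p) (Suc q) (Suc n) z + (of_nat n - of_nat q) * m p (Suc (Suc q)) (Suc n) z = dzb k (m p q n) z"
      using dzb2_m 3 by simp
    ultimately show ?thesis by (rule AL_local)
  qed
qed


lemma wz_W:
  assumes z: "z \<in> Lambda"
  shows "wz (\<lambda>w. \<Sum>n\<le>N. \<Sum>x\<in>Omega n. c n x * m (fst x) (snd x) n w) z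
       = (\<Sum>n\<le>N. \<Sum>x\<in>Omega n. c n x * wz (m (fst x) (snd x) n) z)"
    and "wzb (\<lambda>w. \<Sum>n\<le>N. \<Sum>x\<in>Omega n. c n x * m (fst x) (snd x) n w) z
       = (\<Sum>n\<le>N. \<Sum>x\<in>Omega n. c n x * wzb (m (fst x) (snd x) n) z)"
proof -
  have d1: "(\<lambda>w. \<Sum>x\<in>Omega n. c n x * m (fst x) (snd x) n w) differentiable (at z)" for n
    by (rule sm_diff[OF _ z]) (intro sm_sum finite_Omega sm_cmult sm_m)
  have d2: "(\<lambda>w. c n x * m (fst x) (snd x) n w) differentiable (at z)" for n x
    by (rule sm_diff[OF _ z]) (intro sm_cmult sm_m)
  have d3: "m p q k differentiable (at z)" for p q k
    by (rule sm_diff[OF sm_m z])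
  show "wz (\<lambda>w. \<Sum>n\<le>N. \<Sum>x\<in>Omega n. c n x * m (fst x) (snd x) n w) z
       = (\<Sum>n\<le>N. \<Sum>x\<in>Omega n. c n x * wz (m (fst x) (snd x) n) z)"
    by (simp add: wirt_sum(1)[OF d1] wirt_sum(1)[OF d2] wirt_cmult(1)[OF d3])
  show "wzb (\<lambda>w. \<Sum>n\<le>N. \<Sum>x\<in>Omega n. c n x * m (fst x) (snd x) n w) z
       = (\<Sum>n\<le>N. \<Sum>x\<in>Omega n. c n x * wzb (m (fst x) (snd x) n) z)"
    by (simp add: wirt_sum(2)[OF d1] wirt_sum(2)[OF d2] wirt_cmult(2)[OF d3])
qed

lemma AL_dz:
  assumes k: "k \<le> 2" and V: "AL V"
  shows "AL (dz k V)" "AL (dzb k V)"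
proof -
  obtain W where W: "W \<in> A_all" "\<forall>z\<in>Lambda. V z = W z" using V unfolding AL_def by blast
  obtain N c where Wc: "W = (\<lambda>z. \<Sum>n\<le>N. \<Sum>x\<in>Omega n. c n x * m (fst x) (snd x) n z)"
    using A_all_An_sum[OF W(1)] by blast
  have VW: "\<forall>w\<in>Lambda. V w = W w" using W(2) by blast
  have "AL (\<lambda>z. \<Sum>n\<le>N. \<Sum>x\<in>Omega n. c n x * dz k (m (fst x) (snd x) n) z)"
    by (intro AL_sum finite_Omega finite_atMost AL_cmult AL_dz_m[OF k]) auto
  moreover have "\<forall>z\<in>Lambda. (\<Sum>n\<le>N. \<Sum>x\<in>Omega n. c n x * dz k (m (fst x) (snd x) n) z) = dz k V z"
  proof
    fix z assume z: "z \<in> Lambda"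
    have "wz V z = wz W z" using wz_localL[OF VW] z by blast
    thus "(\<Sum>n\<le>N. \<Sum>x\<in>Omega n. c n x * dz k (m (fst x) (snd x) n) z) = dz k V z"
      unfolding dz_def Wc using wz_W(1)[OF z, where N=N and c=c]
      by (simp add: sum_distrib_left algebra_simps)
  qed
  ultimately show "AL (dz k V)" by (rule AL_local)
  have "AL (\<lambda>z. \<Sum>n\<le>N. \<Sum>x\<in>Omega n. c n x * dzb k (m (fst x) (snd x) n) z)"
    by (intro AL_sum finite_Omega finite_atMost AL_cmult AL_dzb_m[OF k]) auto
  moreover have "\<forall>z\<in>Lambda. (\<Sum>n\<le>N. \<Sum>x\<in>Omega n. c n x * dzb k (m (fst x) (snd x) n) z) = dzb k V z"
  proof
    fix z assume z: "z \<in> Lambda"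
    have "wzb V z = wzb W z" using wzb_localL[OF VW] z by blast
    thus "(\<Sum>n\<le>N. \<Sum>x\<in>Omega n. c n x * dzb k (m (fst x) (snd x) n) z) = dzb k V z"
      unfolding dzb_def Wc using wz_W(2)[OF z, where N=N and c=c]
      by (simp add: sum_distrib_left algebra_simps)
  qed
  ultimately show "AL (dzb k V)" by (rule AL_local)
qed


lemma diff_pow: "(\<lambda>w::complex. w ^ k) differentiable (at z)"
  unfolding differentiable_def using has_derivative_power[OF has_derivative_ident] by blast
lemma diff_cpow: "(\<lambda>w. cnj w ^ k) differentiable (at z)"
  unfolding differentiable_def using has_derivative_power[OF has_derivative_cnj[OF has_derivative_ident]] by blast

lemma wz_pow_mul:
  assumes h: "h differentiable (at z)"
  shows "wz (\<lambda>w. w ^ k * h w) z = of_nat k * z ^ (k - 1) * h z + z ^ k * wz h z"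
    and "wzb (\<lambda>w. w ^ k * h w) z = z ^ k * wzb h z"
  using wirt_mult[OF diff_pow h, of k] wirt_power[OF diff_id, where n=k] by simp_all

lemma wz_cpow_mul:
  assumes h: "h differentiable (at z)"
  shows "wz (\<lambda>w. cnj w ^ k * h w) z = cnj z ^ k * wz h z"
    and "wzb (\<lambda>w. cnj w ^ k * h w) z = of_nat k * cnj z ^ (k - 1) * h z + cnj z ^ k * wzb h z"
  using wirt_mult[OF diff_cpow h, of k] wirt_power[OF diff_cnj, where n=k] by simp_all

lemma sm_dz: "sm f \<Longrightarrow> sm (dz k f)"
  unfolding dz_def by (intro sm_mult sm_power sm_id sm_wz)
lemma sm_dzb: "sm f \<Longrightarrow> sm (dzb k f)"
  unfolding dzb_def by (intro sm_mult sm_power sm_cnj sm_wzb)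

lemma dz_dz:
  assumes g: "sm g" and z: "z \<in> Lambda"
  shows "dz j (dz k g) z = z ^ j * (of_nat k * z ^ (k - 1) * wz g z + z ^ k * wz (wz g) z)"
  unfolding dz_def using wz_pow_mul(1)[OF sm_diff[OF sm_wz[OF g] z], of k] by simp

lemma dzb_dzb:
  assumes g: "sm g" and z: "z \<in> Lambda"
  shows "dzb j (dzb k g) z = cnj z ^ j * (of_nat k * cnj z ^ (k - 1) * wzb g z + cnj z ^ k * wzb (wzb g) z)"
  unfolding dzb_def using wz_cpow_mul(2)[OF sm_diff[OF sm_wzb[OF g] z], of k] by simp

lemma dzb_dz_comm:
  assumes g: "sm g" and z: "z \<in> Lambda"
  shows "dzb j (dz k g) z = dz k (dzb j g) z"
proof -
  have "dzb j (dz k g) z = cnj z ^ j * (z ^ k * wzb (wz g) z)"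
    unfolding dzb_def dz_def using wz_pow_mul(2)[OF sm_diff[OF sm_wz[OF g] z], of k] by simp
  also have "\<dots> = z ^ k * (cnj z ^ j * wz (wzb g) z)" using wirt_comm[OF g z] by simp
  also have "\<dots> = dz k (dzb j g) z"
    unfolding dzb_def dz_def using wz_cpow_mul(1)[OF sm_diff[OF sm_wzb[OF g] z], of j] by simp
  finally show ?thesis .
qed

lemma rel1: "sm g \<Longrightarrow> z \<in> Lambda \<Longrightarrow> dz 1 (dz 2 g) z = dz 2 (dz 1 g) z + dz 2 g z"
  by (simp add: dz_dz) (simp add: dz_def power2_eq_square algebra_simps)
lemma rel2: "sm g \<Longrightarrow> z \<in> Lambda \<Longrightarrow> dz 0 (dz 2 g) z = dz 2 (dz 0 g) z + 2 * dz 1 g z"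
  by (simp add: dz_dz) (simp add: dz_def power2_eq_square algebra_simps)
lemma rel3: "sm g \<Longrightarrow> z \<in> Lambda \<Longrightarrow> dz 0 (dz 1 g) z = dz 1 (dz 0 g) z + dz 0 g z"
  by (simp add: dz_dz) (simp add: dz_def algebra_simps)
lemma relb1: "sm g \<Longrightarrow> z \<in> Lambda \<Longrightarrow> dzb 1 (dzb 2 g) z = dzb 2 (dzb 1 g) z + dzb 2 g z"
  by (simp add: dzb_dzb) (simp add: dzb_def power2_eq_square algebra_simps)
lemma relb2: "sm g \<Longrightarrow> z \<in> Lambda \<Longrightarrow> dzb 0 (dzb 2 g) z = dzb 2 (dzb 0 g) z + 2 * dzb 1 g z"
  by (simp add: dzb_dzb) (simp add: dzb_def power2_eq_square algebra_simps)
lemma relb3: "sm g \<Longrightarrow> z \<in> Lambda \<Longrightarrow> dzb 0 (dzb 1 g) z = dzb 1 (dzb 0 g) z + dzb 0 g z"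
  by (simp add: dzb_dzb) (simp add: dzb_def algebra_simps)

lemma dz_leibniz:
  assumes "sm V" "sm f" "z \<in> Lambda"
  shows "dz k (\<lambda>w. V w * f w) z = dz k V z * f z + V z * dz k f z"
    and "dzb k (\<lambda>w. V w * f w) z = dzb k V z * f z + V z * dzb k f z"
  using wirt_mult[OF sm_diff[OF assms(1,3)] sm_diff[OF assms(2,3)]]
  by (simp_all add: dz_def dzb_def algebra_simps)

lemma D_dz: "D1 = dz 2" "D2 = dz 1" "D3 = dz 0"
  by (rule ext, simp add: D1_def D2_def D3_def dz_def)+
lemma E_dzb: "E1 = dzb 2" "E2 = dzb 1" "E3 = dzb 0"
  by (rule ext, simp add: E1_def E2_def E3_def dzb_def)+

definition good :: "dop \<Rightarrow> bool" where
  "good X \<longleftrightarrow> (\<forall>f g. (\<forall>z\<in>Lambda. f z = g z) \<longrightarrow> (\<forall>z\<in>Lambda. X f z = X g z))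
     \<and> (\<forall>f. sm f \<longrightarrow> sm (X f))
     \<and> (\<forall>f g a b. sm f \<longrightarrow> sm g \<longrightarrow> (\<forall>z\<in>Lambda. X (\<lambda>w. a * f w + b * g w) z = a * X f z + b * X g z))"

lemma good_loc: "good X \<Longrightarrow> \<forall>z\<in>Lambda. f z = g z \<Longrightarrow> z \<in> Lambda \<Longrightarrow> X f z = X g z"
  unfolding good_def by blast
lemma good_sm: "good X \<Longrightarrow> sm f \<Longrightarrow> sm (X f)"
  unfolding good_def by blast
lemma good_lin: "good X \<Longrightarrow> sm f \<Longrightarrow> sm g \<Longrightarrow> z \<in> Lambda \<Longrightarrow>
    X (\<lambda>w. a * f w + b * g w) z = a * X f z + b * X g z"
  unfolding good_def by blast

lemma good_zero: "good X \<Longrightarrow> z \<in> Lambda \<Longrightarrow> X (\<lambda>_. 0) z = 0"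
  using good_lin[of X "\<lambda>_. 0" "\<lambda>_. 0" z 0 0] sm_const by simp

lemma good_sum:
  assumes X: "good X" and I: "finite I" and h: "\<And>i. i \<in> I \<Longrightarrow> sm (h i)" and z: "z \<in> Lambda"
  shows "X (\<lambda>w. \<Sum>i\<in>I. c i * h i w) z = (\<Sum>i\<in>I. c i * X (h i) z)"
  using I h
proof (induction I rule: finite_induct)
  case empty thus ?case using good_zero[OF X z] by simp
next
  case (insert j F)
  have s: "sm (\<lambda>w. \<Sum>i\<in>F. c i * h i w)" by (intro sm_sum sm_cmult insert) auto
  have "X (\<lambda>w. \<Sum>i\<in>insert j F. c i * h i w) z = X (\<lambda>w. c j * h j w + 1 * (\<Sum>i\<in>F. c i * h i w)) z"
    using insert(1,2) by simp
  also have "\<dots> = c j * X (h j) z + 1 * X (\<lambda>w. \<Sum>i\<in>F. c i * h i w) z"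
    by (rule good_lin[OF X _ s z]) (use insert in auto)
  also have "\<dots> = c j * X (h j) z + (\<Sum>i\<in>F. c i * X (h i) z)" using insert by simp
  finally show ?case using insert(1,2) by simp
qed

lemma good_id: "good (\<lambda>f. f)"
  unfolding good_def by simp

lemma good_comp:
  assumes X: "good X" and Y: "good Y"
  shows "good (\<lambda>f. X (Y f))"
  unfolding good_def
proof (intro conjI allI impI ballI)
  fix f g :: cfun and z assume H: "\<forall>z\<in>Lambda. f z = g z" and z: "z \<in> Lambda"
  have "\<forall>z\<in>Lambda. Y f z = Y g z" using good_loc[OF Y H] by blast
  thus "X (Y f) z = X (Y g) z" by (rule good_loc[OF X _ z])
next
  fix f :: cfun assume "sm f" thus "sm (X (Y f))" by (intro good_sm[OF X] good_sm[OF Y])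
next
  fix f g :: cfun and a b :: complex and z
  assume f: "sm f" and g: "sm g" and z: "z \<in> Lambda"
  have "\<forall>w\<in>Lambda. Y (\<lambda>w. a * f w + b * g w) w = a * Y f w + b * Y g w"
    using good_lin[OF Y f g] by blast
  hence "X (Y (\<lambda>w. a * f w + b * g w)) z = X (\<lambda>w. a * Y f w + b * Y g w) z"
    by (rule good_loc[OF X _ z])
  also have "\<dots> = a * X (Y f) z + b * X (Y g) z"
    by (rule good_lin[OF X good_sm[OF Y f] good_sm[OF Y g] z])
  finally show "X (Y (\<lambda>w. a * f w + b * g w)) z = a * X (Y f) z + b * X (Y g) z" .
qed

lemma good_funpow: "good X \<Longrightarrow> good (X ^^ n)"
proof (induction n)
  case 0 thus ?case using good_id by (simp add: id_def)
next
  case (Suc n)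
  have "good (\<lambda>f. X ((X ^^ n) f))" by (rule good_comp[OF Suc.prems Suc.IH[OF Suc.prems]])
  thus ?case by (simp add: comp_def)
qed

lemma good_dz: "good (dz k)"
  unfolding good_def
proof (intro conjI allI impI ballI)
  fix f g :: cfun and z assume H: "\<forall>z\<in>Lambda. f z = g z" and z: "z \<in> Lambda"
  show "dz k f z = dz k g z" using wz_localL[OF H] z by (simp add: dz_def)
next
  fix f :: cfun assume "sm f" thus "sm (dz k f)" by (rule sm_dz)
next
  fix f g :: cfun and a b :: complex and z
  assume f: "sm f" and g: "sm g" and z: "z \<in> Lambda"
  have d1: "(\<lambda>w. a * f w) differentiable (at z)" by (rule sm_diff[OF sm_cmult[OF f] z])
  have d2: "(\<lambda>w. b * g w) differentiable (at z)" by (rule sm_diff[OF sm_cmult[OF g] z])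
  show "dz k (\<lambda>w. a * f w + b * g w) z = a * dz k f z + b * dz k g z"
    unfolding dz_def using wirt_add(1)[OF d1 d2] wirt_cmult(1)[OF sm_diff[OF f z]] wirt_cmult(1)[OF sm_diff[OF g z]]
    by (simp add: algebra_simps)
qed

lemma good_dzb: "good (dzb k)"
  unfolding good_def
proof (intro conjI allI impI ballI)
  fix f g :: cfun and z assume H: "\<forall>z\<in>Lambda. f z = g z" and z: "z \<in> Lambda"
  show "dzb k f z = dzb k g z" using wzb_localL[OF H] z by (simp add: dzb_def)
next
  fix f :: cfun assume "sm f" thus "sm (dzb k f)" by (rule sm_dzb)
next
  fix f g :: cfun and a b :: complex and z
  assume f: "sm f" and g: "sm g" and z: "z \<in> Lambda"
  have d1: "(\<lambda>w. a * f w) differentiable (at z)" by (rule sm_diff[OF sm_cmult[OF f] z])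
  have d2: "(\<lambda>w. b * g w) differentiable (at z)" by (rule sm_diff[OF sm_cmult[OF g] z])
  show "dzb k (\<lambda>w. a * f w + b * g w) z = a * dzb k f z + b * dzb k g z"
    unfolding dzb_def using wirt_add(2)[OF d1 d2] wirt_cmult(2)[OF sm_diff[OF f z]] wirt_cmult(2)[OF sm_diff[OF g z]]
    by (simp add: algebra_simps)
qed

lemma good_mult: "sm V \<Longrightarrow> good (mult_op V)"
  unfolding good_def mult_op_def
proof (intro conjI allI impI ballI)
  fix f g :: cfun and z assume "\<forall>z\<in>Lambda. f z = g z" "z \<in> Lambda"
  thus "V z * f z = V z * g z" by simp
next
  fix f assume "sm V" "sm f" thus "sm (\<lambda>z. V z * f z)" by (rule sm_mult)
next
  fix f g :: cfun and a b :: complex and z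
  show "V z * (a * f z + b * g z) = a * (V z * f z) + b * (V z * g z)" by (simp add: algebra_simps)
qed


lemma sum_if_subset:
  fixes k h :: "'a \<Rightarrow> complex"
  assumes "finite T" "S \<subseteq> T"
  shows "(\<Sum>s\<in>T. (if s \<in> S then k s else 0) * h s) = (\<Sum>s\<in>S. k s * h s)"
proof -
  have "(\<Sum>s\<in>T. (if s \<in> S then k s else 0) * h s) = (\<Sum>s\<in>T. if s \<in> S then k s * h s else 0)"
    by (rule sum.cong) auto
  also have "\<dots> = (\<Sum>s\<in>T \<inter> S. k s * h s)" by (rule sum.inter_restrict[OF assms(1), symmetric])
  also have "T \<inter> S = S" using assms(2) by blast
  finally show ?thesis .
qed

locale sl2 =
  fixes X1 X2 X3 :: dop
  assumes g1: "good X1" and g2: "good X2" and g3: "good X3"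
  and r1: "\<And>g z. sm g \<Longrightarrow> z \<in> Lambda \<Longrightarrow> X2 (X1 g) z = X1 (X2 g) z + X1 g z"
  and r2: "\<And>g z. sm g \<Longrightarrow> z \<in> Lambda \<Longrightarrow> X3 (X1 g) z = X1 (X3 g) z + 2 * X2 g z"
  and r3: "\<And>g z. sm g \<Longrightarrow> z \<in> Lambda \<Longrightarrow> X3 (X2 g) z = X2 (X3 g) z + X3 g z"
begin

definition W :: "nat \<times> nat \<times> nat \<Rightarrow> dop" where
  "W s g = (case s of (a, b, c) \<Rightarrow> (X1 ^^ a) ((X2 ^^ b) ((X3 ^^ c) g)))"

lemma W_eq: "W (a, b, c) = (\<lambda>g. (X1 ^^ a) ((X2 ^^ b) ((X3 ^^ c) g)))"
  by (rule ext) (simp add: W_def)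

lemma good_W: "good (W s)"
proof -
  obtain a b c where s: "s = (a, b, c)" by (cases s) auto
  have "good (\<lambda>g. (X2 ^^ b) ((X3 ^^ c) g))"
    by (rule good_comp[OF good_funpow[OF g2] good_funpow[OF g3]])
  hence "good (\<lambda>g. (X1 ^^ a) ((X2 ^^ b) ((X3 ^^ c) g)))"
    by (rule good_comp[OF good_funpow[OF g1]])
  thus ?thesis unfolding s W_eq .
qed

definition CW :: "dop \<Rightarrow> bool" where
  "CW Op \<longleftrightarrow> (\<exists>S \<kappa>. finite S \<and> (\<forall>g. sm g \<longrightarrow> (\<forall>z\<in>Lambda. Op g z = (\<Sum>s\<in>S. \<kappa> s * W s g z))))"

lemma CW_W: "CW (W s)"
  unfolding CW_def by (intro exI[of _ "{s}"] exI[of _ "\<lambda>_. 1"]) simp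

lemma CW_ext:
  assumes "CW A" and H: "\<And>g z. sm g \<Longrightarrow> z \<in> Lambda \<Longrightarrow> B g z = A g z"
  shows "CW B"
proof -
  obtain S k where A: "finite S" "\<forall>g. sm g \<longrightarrow> (\<forall>z\<in>Lambda. A g z = (\<Sum>s\<in>S. k s * W s g z))"
    using assms(1) unfolding CW_def by blast
  have "\<forall>g. sm g \<longrightarrow> (\<forall>z\<in>Lambda. B g z = (\<Sum>s\<in>S. k s * W s g z))"
    using A(2) H by simp
  thus ?thesis unfolding CW_def using A(1) by blast
qed

lemma CW_zero: "CW (\<lambda>g z. 0)"
  unfolding CW_def by (intro exI[of _ "{}"]) simp

lemma CW_add:
  assumes "CW A" "CW B"
  shows "CW (\<lambda>g z. A g z + B g z)"
proof -
  obtain S k where A: "finite S" "\<forall>g. sm g \<longrightarrow> (\<forall>z\<in>Lambda. A g z = (\<Sum>s\<in>S. k s * W s g z))"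
    using assms(1) unfolding CW_def by blast
  obtain S' k' where B: "finite S'" "\<forall>g. sm g \<longrightarrow> (\<forall>z\<in>Lambda. B g z = (\<Sum>s\<in>S'. k' s * W s g z))"
    using assms(2) unfolding CW_def by blast
  define k'' where "k'' s = (if s \<in> S then k s else 0) + (if s \<in> S' then k' s else 0)" for s
  have fin: "finite (S \<union> S')" using A(1) B(1) by simp
  have "\<forall>g. sm g \<longrightarrow> (\<forall>z\<in>Lambda. A g z + B g z = (\<Sum>s\<in>S \<union> S'. k'' s * W s g z))"
  proof (intro allI impI ballI)
    fix g :: cfun and z assume g: "sm g" and z: "z \<in> Lambda"
    have "(\<Sum>s\<in>S \<union> S'. k'' s * W s g z)
        = (\<Sum>s\<in>S \<union> S'. (if s \<in> S then k s else 0) * W s g z)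
          + (\<Sum>s\<in>S \<union> S'. (if s \<in> S' then k' s else 0) * W s g z)"
      unfolding k''_def by (simp add: distrib_right sum.distrib)
    also have "\<dots> = (\<Sum>s\<in>S. k s * W s g z) + (\<Sum>s\<in>S'. k' s * W s g z)"
      using sum_if_subset[OF fin, of S k "\<lambda>s. W s g z"] sum_if_subset[OF fin, of S' k' "\<lambda>s. W s g z"]
      by simp
    finally show "A g z + B g z = (\<Sum>s\<in>S \<union> S'. k'' s * W s g z)"
      using A(2) B(2) g z by simp
  qed
  thus ?thesis unfolding CW_def using fin by (intro exI[of _ "S \<union> S'"] exI[of _ k'']) simp
qed

lemma CW_scale:
  assumes "CW A"
  shows "CW (\<lambda>g z. c * A g z)"
proof -
  obtain S k where A: "finite S" "\<forall>g. sm g \<longrightarrow> (\<forall>z\<in>Lambda. A g z = (\<Sum>s\<in>S. k s * W s g z))"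
    using assms(1) unfolding CW_def by blast
  have "\<forall>g. sm g \<longrightarrow> (\<forall>z\<in>Lambda. c * A g z = (\<Sum>s\<in>S. (c * k s) * W s g z))"
  proof (intro allI impI ballI)
    fix g z assume "sm g" "z \<in> Lambda"
    hence "A g z = (\<Sum>s\<in>S. k s * W s g z)" using A(2) by blast
    thus "c * A g z = (\<Sum>s\<in>S. (c * k s) * W s g z)" by (simp add: sum_distrib_left mult.assoc)
  qed
  thus ?thesis unfolding CW_def using A(1) by (intro exI[of _ S] exI[of _ "\<lambda>s. c * k s"]) simp
qed

lemma CW_sum:
  assumes "finite I" "\<And>i. i \<in> I \<Longrightarrow> CW (Ops i)"
  shows "CW (\<lambda>g z. \<Sum>i\<in>I. c i * Ops i g z)"
  using assms
proof (induction I rule: finite_induct)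
  case empty thus ?case using CW_zero by simp
next
  case (insert j F)
  have "CW (\<lambda>g z. c j * Ops j g z + (\<Sum>i\<in>F. c i * Ops i g z))"
    by (intro CW_add CW_scale) (use insert in auto)
  thus ?case using insert(1,2) by simp
qed

lemma CW_left:
  assumes X: "good X" and XW: "\<And>s. CW (\<lambda>g. X (W s g))" and A: "CW A"
  shows "CW (\<lambda>g. X (A g))"
proof -
  obtain S k where Ak: "finite S" "\<forall>g. sm g \<longrightarrow> (\<forall>z\<in>Lambda. A g z = (\<Sum>s\<in>S. k s * W s g z))"
    using A unfolding CW_def by blast
  have "CW (\<lambda>g z. \<Sum>s\<in>S. k s * X (W s g) z)"
    by (rule CW_sum[OF Ak(1)]) (rule XW)
  moreover have "X (A g) z = (\<Sum>s\<in>S. k s * X (W s g) z)" if g: "sm g" and z: "z \<in> Lambda" for g z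
  proof -
    have "\<forall>w\<in>Lambda. A g w = (\<Sum>s\<in>S. k s * W s g w)" using Ak(2) g by blast
    hence "X (A g) z = X (\<lambda>w. \<Sum>s\<in>S. k s * W s g w) z" by (rule good_loc[OF X _ z])
    also have "\<dots> = (\<Sum>s\<in>S. k s * X (W s g) z)"
      by (rule good_sum[OF X Ak(1) _ z]) (rule good_sm[OF good_W g])
    finally show ?thesis .
  qed
  ultimately show ?thesis by (rule CW_ext)
qed

lemma sm_W: "sm g \<Longrightarrow> sm (W s g)"
  using good_sm[OF good_W] .

lemma sm_pow: "good X \<Longrightarrow> sm g \<Longrightarrow> sm ((X ^^ n) g)"
  using good_sm[OF good_funpow] .

lemma CW_X1: "CW (\<lambda>g. X1 (W s g))"
proof -
  obtain a b c where s: "s = (a, b, c)" by (cases s) auto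
  have "CW (W (Suc a, b, c))" by (rule CW_W)
  thus ?thesis unfolding s W_eq by simp
qed

lemma r1_pow:
  assumes g: "sm g"
  shows "z \<in> Lambda \<Longrightarrow> X2 ((X1 ^^ a) g) z = (X1 ^^ a) (X2 g) z + of_nat a * (X1 ^^ a) g z"
proof (induction a arbitrary: z)
  case 0 thus ?case by simp
next
  case (Suc a)
  have s1: "sm ((X1 ^^ a) g)" by (rule sm_pow[OF g1 g])
  have s2: "sm ((X1 ^^ a) (X2 g))" by (rule sm_pow[OF g1 good_sm[OF g2 g]])
  have "X2 ((X1 ^^ Suc a) g) z = X1 (X2 ((X1 ^^ a) g)) z + X1 ((X1 ^^ a) g) z"
    using r1[OF s1 Suc.prems] by simp
  also have "X1 (X2 ((X1 ^^ a) g)) z = X1 (\<lambda>w. 1 * (X1 ^^ a) (X2 g) w + of_nat a * (X1 ^^ a) g w) z"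
    by (rule good_loc[OF g1 _ Suc.prems]) (simp add: Suc.IH)
  also have "\<dots> = X1 ((X1 ^^ a) (X2 g)) z + of_nat a * X1 ((X1 ^^ a) g) z"
    using good_lin[OF g1 s2 s1 Suc.prems, of 1 "of_nat a"] by simp
  finally show ?case by (simp add: algebra_simps)
qed

lemma CW_X2: "CW (\<lambda>g. X2 (W s g))"
proof -
  obtain a b c where s: "s = (a, b, c)" by (cases s) auto
  have "CW (\<lambda>g z. W (a, Suc b, c) g z + of_nat a * W (a, b, c) g z)"
    by (intro CW_add CW_scale CW_W)
  moreover have "X2 (W s g) z = W (a, Suc b, c) g z + of_nat a * W (a, b, c) g z"
    if g: "sm g" and z: "z \<in> Lambda" for g z
    unfolding s W_eq using r1_pow[OF sm_pow[OF g2 sm_pow[OF g3 g]] z, of a] by simp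
  ultimately show ?thesis by (rule CW_ext)
qed

lemma CW_X3_0: "CW (\<lambda>g. X3 (W (0, b, c) g))"
proof (induction b)
  case 0
  have "CW (W (0, 0, Suc c))" by (rule CW_W)
  thus ?case by (simp add: W_eq)
next
  case (Suc b)
  have "CW (\<lambda>g z. X2 (X3 (W (0, b, c) g)) z + X3 (W (0, b, c) g) z)"
    by (intro CW_add CW_left[OF g2 CW_X2] Suc.IH)
  moreover have "X3 (W (0, Suc b, c) g) z = X2 (X3 (W (0, b, c) g)) z + X3 (W (0, b, c) g) z"
    if g: "sm g" and z: "z \<in> Lambda" for g z
    using r3[OF sm_W[OF g, of "(0, b, c)"] z] by (simp add: W_eq)
  ultimately show ?case by (rule CW_ext)
qed

lemma CW_X3_ab: "CW (\<lambda>g. X3 (W (a, b, c) g))"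
proof (induction a)
  case 0 thus ?case by (rule CW_X3_0)
next
  case (Suc a)
  have "CW (\<lambda>g z. X1 (X3 (W (a, b, c) g)) z + 2 * X2 (W (a, b, c) g) z)"
    by (intro CW_add CW_scale CW_left[OF g1 CW_X1] Suc.IH CW_X2)
  moreover have "X3 (W (Suc a, b, c) g) z = X1 (X3 (W (a, b, c) g)) z + 2 * X2 (W (a, b, c) g) z"
    if g: "sm g" and z: "z \<in> Lambda" for g z
    using r2[OF sm_W[OF g, of "(a, b, c)"] z] by (simp add: W_eq)
  ultimately show ?case by (rule CW_ext)
qed

lemma CW_X3: "CW (\<lambda>g. X3 (W s g))"
proof -
  obtain a b c where s: "s = (a, b, c)" by (cases s) auto
  show ?thesis unfolding s by (rule CW_X3_ab)
qed

end


interpretation Dsl: sl2 "dz 2" "dz 1" "dz 0"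
  apply unfold_locales
  apply (rule good_dz)+
  apply (rule rel1; assumption)
  apply (rule rel2; assumption)
  apply (rule rel3; assumption)
  done

interpretation Esl: sl2 "dzb 2" "dzb 1" "dzb 0"
  apply unfold_locales
  apply (rule good_dzb)+
  apply (rule relb1; assumption)
  apply (rule relb2; assumption)
  apply (rule relb3; assumption)
  done

lemma mono_op_W: "mono_op (a, b, c, a', b', c') f = Dsl.W (a, b, c) (Esl.W (a', b', c') f)"
  unfolding mono_op_def Dsl.W_eq Esl.W_eq D_dz E_dzb by simp

lemma good_mono: "good (mono_op t)"
proof -
  obtain a b c a' b' c' where t: "t = (a, b, c, a', b', c')" by (cases t) auto
  have "good (\<lambda>f. Dsl.W (a, b, c) (Esl.W (a', b', c') f))"
    by (rule good_comp[OF Dsl.good_W Esl.good_W])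
  moreover have "mono_op t = (\<lambda>f. Dsl.W (a, b, c) (Esl.W (a', b', c') f))"
    by (rule ext) (simp add: t mono_op_W)
  ultimately show ?thesis by simp
qed

lemma sm_mono: "sm f \<Longrightarrow> sm (mono_op t f)"
  by (rule good_sm[OF good_mono])

lemma comm_pow:
  assumes X: "good X" and Y: "good Y"
    and c: "\<And>g z. sm g \<Longrightarrow> z \<in> Lambda \<Longrightarrow> Y (X g) z = X (Y g) z"
    and g: "sm g"
  shows "z \<in> Lambda \<Longrightarrow> Y ((X ^^ n) g) z = (X ^^ n) (Y g) z"
proof (induction n arbitrary: z)
  case 0 thus ?case by simp
next
  case (Suc n)
  have "Y ((X ^^ Suc n) g) z = X (Y ((X ^^ n) g)) z"
    using c[OF good_sm[OF good_funpow[OF X] g] Suc.prems] by simp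
  also have "\<dots> = X ((X ^^ n) (Y g)) z"
    by (rule good_loc[OF X _ Suc.prems]) (use Suc.IH in blast)
  finally show ?case by simp
qed

lemma comm_DW:
  assumes g: "sm g" and z: "z \<in> Lambda"
  shows "dzb j (Dsl.W (a, b, c) g) z = Dsl.W (a, b, c) (dzb j g) z"
proof -
  have c0: "\<And>g z. sm g \<Longrightarrow> z \<in> Lambda \<Longrightarrow> dzb j (dz 0 g) z = dz 0 (dzb j g) z"
    by (rule dzb_dz_comm)
  have c1: "\<And>g z. sm g \<Longrightarrow> z \<in> Lambda \<Longrightarrow> dzb j (dz 1 g) z = dz 1 (dzb j g) z"
    by (rule dzb_dz_comm)
  have c2: "\<And>g z. sm g \<Longrightarrow> z \<in> Lambda \<Longrightarrow> dzb j (dz 2 g) z = dz 2 (dzb j g) z"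
    by (rule dzb_dz_comm)
  have s3: "sm ((dz 0 ^^ c) g)" by (rule good_sm[OF good_funpow[OF good_dz] g])
  have s23: "sm ((dz 1 ^^ b) ((dz 0 ^^ c) g))" by (rule good_sm[OF good_funpow[OF good_dz] s3])
  have e3: "\<forall>w\<in>Lambda. dzb j ((dz 0 ^^ c) g) w = (dz 0 ^^ c) (dzb j g) w"
  proof
    fix w assume w: "w \<in> Lambda"
    show "dzb j ((dz 0 ^^ c) g) w = (dz 0 ^^ c) (dzb j g) w"
      by (rule comm_pow[OF good_dz good_dzb c0 g w])
  qed
  have e23: "\<forall>w\<in>Lambda. dzb j ((dz 1 ^^ b) ((dz 0 ^^ c) g)) w = (dz 1 ^^ b) ((dz 0 ^^ c) (dzb j g)) w"
  proof
    fix w assume w: "w \<in> Lambda"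
    have "dzb j ((dz 1 ^^ b) ((dz 0 ^^ c) g)) w = (dz 1 ^^ b) (dzb j ((dz 0 ^^ c) g)) w"
      by (rule comm_pow[OF good_dz good_dzb c1 s3 w])
    also have "\<dots> = (dz 1 ^^ b) ((dz 0 ^^ c) (dzb j g)) w"
      by (rule good_loc[OF good_funpow[OF good_dz] e3 w])
    finally show "dzb j ((dz 1 ^^ b) ((dz 0 ^^ c) g)) w = (dz 1 ^^ b) ((dz 0 ^^ c) (dzb j g)) w" .
  qed
  have "dzb j (Dsl.W (a, b, c) g) z = dzb j ((dz 2 ^^ a) ((dz 1 ^^ b) ((dz 0 ^^ c) g))) z"
    unfolding Dsl.W_eq ..
  also have "\<dots> = (dz 2 ^^ a) (dzb j ((dz 1 ^^ b) ((dz 0 ^^ c) g))) z"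
    by (rule comm_pow[OF good_dz good_dzb c2 s23 z])
  also have "\<dots> = (dz 2 ^^ a) ((dz 1 ^^ b) ((dz 0 ^^ c) (dzb j g))) z"
    by (rule good_loc[OF good_funpow[OF good_dz] e23 z])
  also have "\<dots> = Dsl.W (a, b, c) (dzb j g) z"
    unfolding Dsl.W_eq ..
  finally show ?thesis .
qed

type_synonym idx = "nat \<times> nat \<times> nat \<times> nat \<times> nat \<times> nat"

definition NF :: "idx set \<Rightarrow> (idx \<Rightarrow> cfun) \<Rightarrow> dop" where
  "NF S V f = (\<lambda>z. \<Sum>t\<in>S. V t z * mono_op t f z)"

definition opeq :: "dop \<Rightarrow> dop \<Rightarrow> bool" where
  "opeq L M \<longleftrightarrow> (\<forall>f. sm f \<longrightarrow> (\<forall>z\<in>Lambda. L f z = M f z))"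

lemma op_eq_opeq: "op_eq L M \<longleftrightarrow> opeq L M"
  unfolding op_eq_def opeq_def smooth_iff_sm ..

definition Bp :: "dop \<Rightarrow> bool" where
  "Bp L \<longleftrightarrow> (\<exists>S V. finite S \<and> (\<forall>t. AL (V t)) \<and> opeq L (NF S V))"

lemma Bp_ext:
  assumes "Bp M" and H: "\<And>f z. sm f \<Longrightarrow> z \<in> Lambda \<Longrightarrow> L f z = M f z"
  shows "Bp L"
proof -
  obtain S V where SV: "finite S" "\<forall>t. AL (V t)" "opeq M (NF S V)" using assms(1) unfolding Bp_def by blast
  have "opeq L (NF S V)" using SV(3) H unfolding opeq_def by simp
  thus ?thesis unfolding Bp_def using SV(1,2) by blast
qed

lemma Bp_zero: "Bp (\<lambda>f z. 0)"
  unfolding Bp_def opeq_def NF_def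
  by (intro exI[of _ "{}"] exI[of _ "\<lambda>_ _. 0"]) (simp add: AL_zero)

lemma Bp_mono: "AL a \<Longrightarrow> Bp (\<lambda>f z. a z * mono_op t f z)"
  unfolding Bp_def opeq_def NF_def
  by (intro exI[of _ "{t}"] exI[of _ "\<lambda>_. a"]) simp

lemma Bp_add:
  assumes "Bp L" "Bp M"
  shows "Bp (\<lambda>f z. L f z + M f z)"
proof -
  obtain S V where A: "finite S" "\<forall>t. AL (V t)" "opeq L (NF S V)" using assms(1) unfolding Bp_def by blast
  obtain S' V' where B: "finite S'" "\<forall>t. AL (V' t)" "opeq M (NF S' V')" using assms(2) unfolding Bp_def by blast
  define V'' where "V'' t = (\<lambda>z. (if t \<in> S then V t z else 0) + (if t \<in> S' then V' t z else 0))" for t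
  have fin: "finite (S \<union> S')" using A(1) B(1) by simp
  have AL'': "\<forall>t. AL (V'' t)"
  proof
    fix t
    have v: "AL (V t)" "AL (V' t)" using A(2) B(2) by blast+
    have "AL (\<lambda>z. if t \<in> S then V t z else 0)" using v(1) AL_zero by (cases "t \<in> S") simp_all
    moreover have "AL (\<lambda>z. if t \<in> S' then V' t z else 0)" using v(2) AL_zero by (cases "t \<in> S'") simp_all
    ultimately show "AL (V'' t)" unfolding V''_def by (rule AL_add)
  qed
  have "opeq (\<lambda>f z. L f z + M f z) (NF (S \<union> S') V'')"
    unfolding opeq_def
  proof (intro allI impI ballI)
    fix f :: cfun and z assume f: "sm f" and z: "z \<in> Lambda"
    have "NF (S \<union> S') V'' f z
        = (\<Sum>t\<in>S \<union> S'. (if t \<in> S then V t z else 0) * mono_op t f z)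
          + (\<Sum>t\<in>S \<union> S'. (if t \<in> S' then V' t z else 0) * mono_op t f z)"
      unfolding NF_def V''_def by (simp add: distrib_right sum.distrib)
    also have "\<dots> = NF S V f z + NF S' V' f z"
      using sum_if_subset[OF fin, of S "\<lambda>t. V t z" "\<lambda>t. mono_op t f z"]
        sum_if_subset[OF fin, of S' "\<lambda>t. V' t z" "\<lambda>t. mono_op t f z"]
      by (simp add: NF_def)
    also have "\<dots> = L f z + M f z" using A(3) B(3) f z unfolding opeq_def by simp
    finally show "L f z + M f z = NF (S \<union> S') V'' f z" by simp
  qed
  thus ?thesis unfolding Bp_def using fin AL'' by blast
qed

lemma Bp_lmult:
  assumes a: "AL a" and M: "Bp M"
  shows "Bp (\<lambda>f z. a z * M f z)"
proof -
  obtain S V where A: "finite S" "\<forall>t. AL (V t)" "opeq M (NF S V)" using M unfolding Bp_def by blast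
  have AL': "\<forall>t. AL (\<lambda>z. a z * V t z)" using A(2) AL_mult[OF a] by blast
  have "opeq (\<lambda>f z. a z * M f z) (NF S (\<lambda>t z. a z * V t z))"
    unfolding opeq_def
  proof (intro allI impI ballI)
    fix f :: cfun and z assume f: "sm f" and z: "z \<in> Lambda"
    have "M f z = NF S V f z" using A(3) f z unfolding opeq_def by blast
    thus "a z * M f z = NF S (\<lambda>t z. a z * V t z) f z"
      unfolding NF_def by (simp add: sum_distrib_left mult.assoc)
  qed
  thus ?thesis unfolding Bp_def using A(1) AL' by (intro exI[of _ S] exI[of _ "\<lambda>t z. a z * V t z"]) simp
qed

lemma Bp_scale: "Bp M \<Longrightarrow> Bp (\<lambda>f z. c * M f z)"
  using Bp_lmult[OF AL_const[of c]] by simp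

lemma Bp_sum:
  assumes "finite I" "\<And>i. i \<in> I \<Longrightarrow> Bp (Ls i)"
  shows "Bp (\<lambda>f z. \<Sum>i\<in>I. Ls i f z)"
  using assms
proof (induction I rule: finite_induct)
  case empty thus ?case using Bp_zero by simp
next
  case (insert j F)
  have "Bp (\<lambda>f z. Ls j f z + (\<Sum>i\<in>F. Ls i f z))"
    by (rule Bp_add) (use insert in auto)
  thus ?case using insert(1,2) by simp
qed

lemma sm_NF: "finite S \<Longrightarrow> \<forall>t. AL (V t) \<Longrightarrow> sm f \<Longrightarrow> sm (NF S V f)"
proof -
  assume S: "finite S" and V: "\<forall>t. AL (V t)" and f: "sm f"
  show ?thesis unfolding NF_def
  proof (rule sm_sum[OF S])
    fix t
    have "AL (V t)" using V by blast
    thus "sm (\<lambda>z. V t z * mono_op t f z)" by (intro sm_mult sm_AL sm_mono f)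
  qed
qed

lemma Bp_sm: "Bp L \<Longrightarrow> sm f \<Longrightarrow> sm (L f)"
proof -
  assume "Bp L" "sm f"
  then obtain S V where A: "finite S" "\<forall>t. AL (V t)" "opeq L (NF S V)" unfolding Bp_def by blast
  have "sm (NF S V f)" by (rule sm_NF[OF A(1,2) \<open>sm f\<close>])
  moreover have "\<And>w. w \<in> Lambda \<Longrightarrow> NF S V f w = L f w" using A(3) \<open>sm f\<close> unfolding opeq_def by simp
  ultimately show "sm (L f)" by (rule sm_local)
qed


lemma Bp_left:
  assumes X: "good X"
    and leib: "\<And>V f z. sm V \<Longrightarrow> sm f \<Longrightarrow> z \<in> Lambda \<Longrightarrow> X (\<lambda>w. V w * f w) z = \<delta> V z * f z + V z * X f z"
    and dAL: "\<And>V. AL V \<Longrightarrow> AL (\<delta> V)"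
    and Xm: "\<And>t. Bp (\<lambda>f. X (mono_op t f))"
    and L: "Bp L"
  shows "Bp (\<lambda>f. X (L f))"
proof -
  obtain S V where A: "finite S" "\<forall>t. AL (V t)" "opeq L (NF S V)" using L unfolding Bp_def by blast
  have "Bp (\<lambda>f z. \<Sum>t\<in>S. (\<delta> (V t) z * mono_op t f z + V t z * X (mono_op t f) z))"
  proof (rule Bp_sum[OF A(1)])
    fix t
    have v: "AL (V t)" using A(2) by blast
    show "Bp (\<lambda>f z. \<delta> (V t) z * mono_op t f z + V t z * X (mono_op t f) z)"
      by (rule Bp_add[OF Bp_mono[OF dAL[OF v]] Bp_lmult[OF v Xm]])
  qed
  moreover have "X (L f) z = (\<Sum>t\<in>S. (\<delta> (V t) z * mono_op t f z + V t z * X (mono_op t f) z))"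
    if f: "sm f" and z: "z \<in> Lambda" for f z
  proof -
    have "\<forall>w\<in>Lambda. L f w = NF S V f w" using A(3) f unfolding opeq_def by blast
    hence "X (L f) z = X (NF S V f) z" by (rule good_loc[OF X _ z])
    also have "NF S V f = (\<lambda>w. \<Sum>t\<in>S. 1 * (V t w * mono_op t f w))" by (simp add: NF_def fun_eq_iff)
    also have "X (\<lambda>w. \<Sum>t\<in>S. 1 * (V t w * mono_op t f w)) z = (\<Sum>t\<in>S. 1 * X (\<lambda>w. V t w * mono_op t f w) z)"
    proof (rule good_sum[OF X A(1) _ z])
      fix t
      have "AL (V t)" using A(2) by blast
      thus "sm (\<lambda>w. V t w * mono_op t f w)" by (intro sm_mult sm_AL sm_mono f)
    qed
    also have "\<dots> = (\<Sum>t\<in>S. (\<delta> (V t) z * mono_op t f z + V t z * X (mono_op t f) z))"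
    proof (rule sum.cong[OF refl])
      fix t
      have "AL (V t)" using A(2) by blast
      thus "1 * X (\<lambda>w. V t w * mono_op t f w) z = \<delta> (V t) z * mono_op t f z + V t z * X (mono_op t f) z"
        using leib[OF sm_AL sm_mono[OF f] z] by simp
    qed
    finally show ?thesis .
  qed
  ultimately show ?thesis by (rule Bp_ext)
qed

definition comb :: "nat \<times> nat \<times> nat \<Rightarrow> nat \<times> nat \<times> nat \<Rightarrow> idx" where
  "comb s s2 = (case s of (a, b, c) \<Rightarrow> case s2 of (a', b', c') \<Rightarrow> (a, b, c, a', b', c'))"

lemma mono_comb: "mono_op (comb s s2) f = Dsl.W s (Esl.W s2 f)"
  by (cases s; cases s2) (simp add: comb_def mono_op_W)

lemma Bp_DCW:
  assumes "Dsl.CW Op"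
  shows "Bp (\<lambda>f. Op (Esl.W s2 f))"
proof -
  obtain S k where A: "finite S" "\<forall>g. sm g \<longrightarrow> (\<forall>z\<in>Lambda. Op g z = (\<Sum>s\<in>S. k s * Dsl.W s g z))"
    using assms unfolding Dsl.CW_def by blast
  have "Bp (\<lambda>f z. \<Sum>s\<in>S. k s * mono_op (comb s s2) f z)"
    by (rule Bp_sum[OF A(1)], rule Bp_mono[OF AL_const])
  moreover have "Op (Esl.W s2 f) z = (\<Sum>s\<in>S. k s * mono_op (comb s s2) f z)"
    if f: "sm f" and z: "z \<in> Lambda" for f z
    using A(2) Esl.sm_W[OF f] z by (simp add: mono_comb)
  ultimately show ?thesis by (rule Bp_ext)
qed

lemma Bp_ECW:
  assumes "Esl.CW Op"
  shows "Bp (\<lambda>f. Dsl.W s (Op f))"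
proof -
  obtain S k where A: "finite S" "\<forall>g. sm g \<longrightarrow> (\<forall>z\<in>Lambda. Op g z = (\<Sum>s\<in>S. k s * Esl.W s g z))"
    using assms unfolding Esl.CW_def by blast
  have "Bp (\<lambda>f z. \<Sum>s2\<in>S. k s2 * mono_op (comb s s2) f z)"
    by (rule Bp_sum[OF A(1)], rule Bp_mono[OF AL_const])
  moreover have "Dsl.W s (Op f) z = (\<Sum>s2\<in>S. k s2 * mono_op (comb s s2) f z)"
    if f: "sm f" and z: "z \<in> Lambda" for f z
  proof -
    have "\<forall>w\<in>Lambda. Op f w = (\<Sum>s2\<in>S. k s2 * Esl.W s2 f w)" using A(2) f by blast
    hence "Dsl.W s (Op f) z = Dsl.W s (\<lambda>w. \<Sum>s2\<in>S. k s2 * Esl.W s2 f w) z"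
      by (rule good_loc[OF Dsl.good_W _ z])
    also have "\<dots> = (\<Sum>s2\<in>S. k s2 * Dsl.W s (Esl.W s2 f) z)"
      by (rule good_sum[OF Dsl.good_W A(1) Esl.sm_W[OF f] z])
    finally show ?thesis by (simp add: mono_comb)
  qed
  ultimately show ?thesis by (rule Bp_ext)
qed

lemma mono_split: obtains s s2 where "t = comb s s2"
proof -
  obtain a b c a' b' c' where "t = (a, b, c, a', b', c')" by (cases t) auto
  hence "t = comb (a, b, c) (a', b', c')" by (simp add: comb_def)
  thus ?thesis using that by blast
qed

lemma Bp_dz_mono: "k \<le> 2 \<Longrightarrow> Bp (\<lambda>f. dz k (mono_op t f))"
proof -
  assume k: "k \<le> 2"
  obtain s s2 where t: "t = comb s s2" by (rule mono_split)
  have "Dsl.CW (\<lambda>g. dz k (Dsl.W s g))"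
  proof -
    consider "k = 0" | "k = 1" | "k = 2" using k by linarith
    thus ?thesis
    proof cases
      case 1 thus ?thesis using Dsl.CW_X3 by simp
    next
      case 2 thus ?thesis using Dsl.CW_X2 by simp
    next
      case 3 thus ?thesis using Dsl.CW_X1 by simp
    qed
  qed
  from Bp_DCW[OF this, of s2] show ?thesis unfolding t mono_comb .
qed

lemma Bp_dzb_mono: "k \<le> 2 \<Longrightarrow> Bp (\<lambda>f. dzb k (mono_op t f))"
proof -
  assume k: "k \<le> 2"
  obtain s s2 where t: "t = comb s s2" by (rule mono_split)
  obtain a b c where s: "s = (a, b, c)" by (cases s) auto
  have "Esl.CW (\<lambda>g. dzb k (Esl.W s2 g))"
  proof -
    consider "k = 0" | "k = 1" | "k = 2" using k by linarith
    thus ?thesis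
    proof cases
      case 1 thus ?thesis using Esl.CW_X3 by simp
    next
      case 2 thus ?thesis using Esl.CW_X2 by simp
    next
      case 3 thus ?thesis using Esl.CW_X1 by simp
    qed
  qed
  from Bp_ECW[OF this, of s] have "Bp (\<lambda>f. Dsl.W s (dzb k (Esl.W s2 f)))" .
  moreover have "dzb k (mono_op t f) z = Dsl.W s (dzb k (Esl.W s2 f)) z"
    if f: "sm f" and z: "z \<in> Lambda" for f z
    unfolding t mono_comb s by (rule comm_DW[OF Esl.sm_W[OF f] z])
  ultimately show ?thesis by (rule Bp_ext)
qed

lemma Bp_dz:
  assumes k: "k \<le> 2" and L: "Bp L"
  shows "Bp (\<lambda>f. dz k (L f))"
  apply (rule Bp_left[where \<delta>="dz k" and X="dz k"])
      apply (rule good_dz)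
     apply (simp add: dz_leibniz)
    apply (erule AL_dz(1)[OF k])
   apply (rule Bp_dz_mono[OF k])
  apply (rule L)
  done

lemma Bp_dzb:
  assumes k: "k \<le> 2" and L: "Bp L"
  shows "Bp (\<lambda>f. dzb k (L f))"
  apply (rule Bp_left[where \<delta>="dzb k" and X="dzb k"])
      apply (rule good_dzb)
     apply (simp add: dz_leibniz)
    apply (erule AL_dz(2)[OF k])
   apply (rule Bp_dzb_mono[OF k])
  apply (rule L)
  done

lemma Bp_pow:
  assumes X: "\<And>L. Bp L \<Longrightarrow> Bp (\<lambda>f. X (L f))" and M: "Bp M"
  shows "Bp (\<lambda>f. (X ^^ n) (M f))"
proof (induction n)
  case 0 thus ?case using M by simp
next
  case (Suc n)
  have "Bp (\<lambda>f. X ((X ^^ n) (M f)))" by (rule X[OF Suc.IH])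
  thus ?case by simp
qed

lemma Bp_mono_comp: "Bp M \<Longrightarrow> Bp (\<lambda>f. mono_op t (M f))"
proof -
  assume M: "Bp M"
  obtain a b c a' b' c' where t: "t = (a, b, c, a', b', c')" by (cases t) auto
  have X: "\<And>k L. k \<le> 2 \<Longrightarrow> Bp L \<Longrightarrow> Bp (\<lambda>f. dz k (L f))" "\<And>k L. k \<le> 2 \<Longrightarrow> Bp L \<Longrightarrow> Bp (\<lambda>f. dzb k (L f))"
    using Bp_dz Bp_dzb by blast+
  have "Bp (\<lambda>f. (dz 2 ^^ a) ((dz 1 ^^ b) ((dz 0 ^^ c) ((dzb 2 ^^ a') ((dzb 1 ^^ b') ((dzb 0 ^^ c') (M f)))))))"
    by (intro Bp_pow[OF X(1)] Bp_pow[OF X(2)] M) simp_all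
  thus ?thesis unfolding t mono_op_def D_dz E_dzb by simp
qed

lemma Bp_comp:
  assumes L: "Bp L" and M: "Bp M"
  shows "Bp (op_comp L M)"
proof -
  obtain S V where A: "finite S" "\<forall>t. AL (V t)" "opeq L (NF S V)" using L unfolding Bp_def by blast
  have "Bp (\<lambda>f z. \<Sum>t\<in>S. V t z * mono_op t (M f) z)"
  proof (rule Bp_sum[OF A(1)])
    fix t
    have "AL (V t)" using A(2) by blast
    thus "Bp (\<lambda>f z. V t z * mono_op t (M f) z)" by (rule Bp_lmult[OF _ Bp_mono_comp[OF M]])
  qed
  moreover have "op_comp L M f z = (\<Sum>t\<in>S. V t z * mono_op t (M f) z)"
    if f: "sm f" and z: "z \<in> Lambda" for f z
    using A(3) Bp_sm[OF M f] z unfolding opeq_def op_comp_def NF_def by simp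
  ultimately show ?thesis by (rule Bp_ext)
qed


abbreviation Galg :: "dop set" where
  "Galg \<equiv> gen_alg {inv_diff, D1, D2, D3, E1, E2, E3}"

lemma inv_diff_uu: "inv_diff = mult_op uu"
  unfolding inv_diff_def by (simp add: uu_def[abs_def])

lemma good_add:
  assumes L: "good L" and M: "good M"
  shows "good (op_add L M)"
  unfolding good_def op_add_def
proof (intro conjI allI impI ballI)
  fix f g :: cfun and z assume H: "\<forall>z\<in>Lambda. f z = g z" and z: "z \<in> Lambda"
  show "L f z + M f z = L g z + M g z" using good_loc[OF L H z] good_loc[OF M H z] by simp
next
  fix f :: cfun assume f: "sm f"
  show "sm (\<lambda>z. L f z + M f z)" by (rule sm_add[OF good_sm[OF L f] good_sm[OF M f]])
next
  fix f g :: cfun and a b :: complex and z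
  assume f: "sm f" and g: "sm g" and z: "z \<in> Lambda"
  show "L (\<lambda>w. a * f w + b * g w) z + M (\<lambda>w. a * f w + b * g w) z = a * (L f z + M f z) + b * (L g z + M g z)"
    using good_lin[OF L f g z, of a b] good_lin[OF M f g z, of a b] by (simp add: algebra_simps)
qed

lemma good_scale: "good L \<Longrightarrow> good (op_scale c L)"
proof -
  assume L: "good L"
  have "op_scale c L = (\<lambda>f. mult_op (\<lambda>_. c) (L f))" by (simp add: op_scale_def mult_op_def fun_eq_iff)
  thus ?thesis using good_comp[OF good_mult[OF sm_const] L] by simp
qed

lemma good_Galg: "M \<in> Galg \<Longrightarrow> good M"
proof (induction rule: gen_alg.induct)
  case gen_id thus ?case by (rule good_id)
next
  case (gen_base g)
  thus ?case using good_dz good_dzb good_mult[OF sm_uu]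
    by (auto simp: D_dz E_dzb inv_diff_uu)
next
  case (gen_add L M) show ?case by (rule good_add[OF gen_add.IH])
next
  case (gen_scale L c) show ?case by (rule good_scale[OF gen_scale.IH])
next
  case (gen_comp L M)
  have "op_comp L M = (\<lambda>f. L (M f))" by (simp add: op_comp_def fun_eq_iff)
  thus ?case using good_comp[OF gen_comp.IH] by simp
qed

definition GE :: "dop \<Rightarrow> bool" where
  "GE L \<longleftrightarrow> (\<exists>M\<in>Galg. opeq L M)"

lemma GE_of: "M \<in> Galg \<Longrightarrow> GE M"
  unfolding GE_def opeq_def by blast

lemma GE_ext:
  assumes "GE M" and H: "\<And>f z. sm f \<Longrightarrow> z \<in> Lambda \<Longrightarrow> L f z = M f z"
  shows "GE L"
proof -
  obtain M' where "M' \<in> Galg" "opeq M M'" using assms(1) unfolding GE_def by blast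
  moreover have "opeq L M'" using \<open>opeq M M'\<close> H unfolding opeq_def by simp
  ultimately show ?thesis unfolding GE_def by blast
qed

lemma GE_add:
  assumes "GE L" "GE M"
  shows "GE (\<lambda>f z. L f z + M f z)"
proof -
  obtain L' where L': "L' \<in> Galg" "opeq L L'" using assms(1) unfolding GE_def by blast
  obtain M' where M': "M' \<in> Galg" "opeq M M'" using assms(2) unfolding GE_def by blast
  have "op_add L' M' \<in> Galg" using L'(1) M'(1) by (rule gen_add)
  moreover have "opeq (\<lambda>f z. L f z + M f z) (op_add L' M')"
    using L'(2) M'(2) unfolding opeq_def op_add_def by simp
  ultimately show ?thesis unfolding GE_def by blast
qed

lemma GE_scale:
  assumes "GE L"
  shows "GE (\<lambda>f z. c * L f z)"
proof -
  obtain L' where L': "L' \<in> Galg" "opeq L L'" using assms(1) unfolding GE_def by blast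
  have "op_scale c L' \<in> Galg" using L'(1) by (rule gen_scale)
  moreover have "opeq (\<lambda>f z. c * L f z) (op_scale c L')"
    using L'(2) unfolding opeq_def op_scale_def by simp
  ultimately show ?thesis unfolding GE_def by blast
qed

lemma GE_comp:
  assumes "GE L" "GE M"
  shows "GE (\<lambda>f. L (M f))"
proof -
  obtain L' where L': "L' \<in> Galg" "opeq L L'" using assms(1) unfolding GE_def by blast
  obtain M' where M': "M' \<in> Galg" "opeq M M'" using assms(2) unfolding GE_def by blast
  have "op_comp L' M' \<in> Galg" using L'(1) M'(1) by (rule gen_comp)
  moreover have "opeq (\<lambda>f. L (M f)) (op_comp L' M')"
    unfolding opeq_def op_comp_def
  proof (intro allI impI ballI)
    fix f :: cfun and z assume f: "sm f" and z: "z \<in> Lambda"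
    have eqM: "\<forall>w\<in>Lambda. M f w = M' f w" using M'(2) f unfolding opeq_def by blast
    have smM: "sm (M f)"
      by (rule sm_local[OF good_sm[OF good_Galg[OF M'(1)] f]]) (use eqM in simp)
    have "L (M f) z = L' (M f) z" using L'(2) smM z unfolding opeq_def by blast
    also have "\<dots> = L' (M' f) z" by (rule good_loc[OF good_Galg[OF L'(1)] eqM z])
    finally show "L (M f) z = L' (M' f) z" .
  qed
  ultimately show ?thesis unfolding GE_def by blast
qed

lemma GE_zero: "GE (\<lambda>f z. 0)"
  using GE_scale[OF GE_of[OF gen_id], of 0] by simp

lemma GE_sum:
  assumes "finite I" "\<And>i. i \<in> I \<Longrightarrow> GE (Ls i)"
  shows "GE (\<lambda>f z. \<Sum>i\<in>I. Ls i f z)"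
  using assms
proof (induction I rule: finite_induct)
  case empty thus ?case using GE_zero by simp
next
  case (insert j F)
  have "GE (\<lambda>f z. Ls j f z + (\<Sum>i\<in>F. Ls i f z))"
    by (rule GE_add) (use insert in auto)
  thus ?case using insert(1,2) by simp
qed

lemma Galg_pow:
  assumes X: "X \<in> Galg" and h: "h \<in> Galg"
  shows "(\<lambda>f. (X ^^ n) (h f)) \<in> Galg"
proof (induction n)
  case 0
  have "(\<lambda>f. h f) = h" by (rule ext) simp
  thus ?case using h by simp
next
  case (Suc n)
  have "op_comp X (\<lambda>f. (X ^^ n) (h f)) \<in> Galg" by (rule gen_comp[OF X Suc.IH])
  moreover have "op_comp X (\<lambda>f. (X ^^ n) (h f)) = (\<lambda>f. (X ^^ Suc n) (h f))"
    by (simp add: op_comp_def fun_eq_iff)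
  ultimately show ?case by simp
qed

lemma mono_Galg: "mono_op t \<in> Galg"
proof -
  obtain a b c a' b' c' where t: "t = (a, b, c, a', b', c')" by (cases t) auto
  have g: "D1 \<in> Galg" "D2 \<in> Galg" "D3 \<in> Galg" "E1 \<in> Galg" "E2 \<in> Galg" "E3 \<in> Galg"
    by (simp_all add: gen_base)
  have "(\<lambda>f. (D1 ^^ a) ((D2 ^^ b) ((D3 ^^ c) ((E1 ^^ a') ((E2 ^^ b') ((E3 ^^ c') ((\<lambda>f. f) f))))))) \<in> Galg"
    by (intro Galg_pow[OF g(1)] Galg_pow[OF g(2)] Galg_pow[OF g(3)] Galg_pow[OF g(4)]
        Galg_pow[OF g(5)] Galg_pow[OF g(6)] gen_id)
  moreover have "mono_op t = (\<lambda>f. (D1 ^^ a) ((D2 ^^ b) ((D3 ^^ c) ((E1 ^^ a') ((E2 ^^ b') ((E3 ^^ c') ((\<lambda>f. f) f)))))))"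
    by (rule ext) (simp add: t mono_op_def)
  ultimately show ?thesis by simp
qed

definition Mset :: "cfun \<Rightarrow> bool" where
  "Mset V \<longleftrightarrow> sm V \<and> GE (mult_op V)"

lemma M_local:
  assumes V: "Mset V" and H: "\<And>z. z \<in> Lambda \<Longrightarrow> V' z = V z"
  shows "Mset V'"
proof -
  have s: "sm V" and g: "GE (mult_op V)" using V unfolding Mset_def by blast+
  have "sm V'" by (rule sm_local[OF s]) (simp add: H)
  moreover have "GE (mult_op V')" by (rule GE_ext[OF g]) (simp add: mult_op_def H)
  ultimately show ?thesis unfolding Mset_def by blast
qed

lemma M_add:
  assumes V: "Mset V" and W: "Mset W"
  shows "Mset (\<lambda>z. V z + W z)"
proof -
  have s: "sm V" "sm W" and g: "GE (mult_op V)" "GE (mult_op W)" using V W unfolding Mset_def by blast+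
  have "GE (\<lambda>f z. mult_op V f z + mult_op W f z)" by (rule GE_add[OF g])
  moreover have "(\<lambda>f z. mult_op V f z + mult_op W f z) = mult_op (\<lambda>z. V z + W z)"
    unfolding mult_op_def by (intro ext) (simp add: distrib_right)
  ultimately have "GE (mult_op (\<lambda>z. V z + W z))" by simp
  thus ?thesis unfolding Mset_def using sm_add[OF s] by blast
qed

lemma M_cmult:
  assumes V: "Mset V"
  shows "Mset (\<lambda>z. c * V z)"
proof -
  have s: "sm V" and g: "GE (mult_op V)" using V unfolding Mset_def by blast+
  have "GE (\<lambda>f z. c * mult_op V f z)" by (rule GE_scale[OF g])
  moreover have "(\<lambda>f z. c * mult_op V f z) = mult_op (\<lambda>z. c * V z)"
    unfolding mult_op_def by (intro ext) (simp add: mult.assoc)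
  ultimately have "GE (mult_op (\<lambda>z. c * V z))" by simp
  thus ?thesis unfolding Mset_def using sm_cmult[OF s] by blast
qed

lemma M_mult:
  assumes V: "Mset V" and W: "Mset W"
  shows "Mset (\<lambda>z. V z * W z)"
proof -
  have s: "sm V" "sm W" and g: "GE (mult_op V)" "GE (mult_op W)" using V W unfolding Mset_def by blast+
  have "GE (\<lambda>f. mult_op V (mult_op W f))" by (rule GE_comp[OF g])
  moreover have "(\<lambda>f. mult_op V (mult_op W f)) = mult_op (\<lambda>z. V z * W z)"
    unfolding mult_op_def by (intro ext) (simp add: mult.assoc)
  ultimately have "GE (mult_op (\<lambda>z. V z * W z))" by simp
  thus ?thesis unfolding Mset_def using sm_mult[OF s] by blast
qed

lemma M_one: "Mset (\<lambda>_. 1)"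
  unfolding Mset_def
proof
  show "sm (\<lambda>_. 1)" by (rule sm_const)
  have "mult_op (\<lambda>_. 1) = (\<lambda>f. f)" by (simp add: mult_op_def fun_eq_iff)
  thus "GE (mult_op (\<lambda>_. 1))" using GE_of[OF gen_id] by simp
qed

lemma M_uu: "Mset uu"
  unfolding Mset_def
proof
  show "sm uu" by (rule sm_uu)
  have "inv_diff \<in> Galg" by (simp add: gen_base)
  thus "GE (mult_op uu)" using GE_of by (simp add: inv_diff_uu)
qed

lemma dz_Galg: "k \<le> 2 \<Longrightarrow> dz k \<in> Galg" "k \<le> 2 \<Longrightarrow> dzb k \<in> Galg"
proof -
  assume k: "k \<le> 2"
  have g: "D1 \<in> Galg" "D2 \<in> Galg" "D3 \<in> Galg" "E1 \<in> Galg" "E2 \<in> Galg" "E3 \<in> Galg"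
    by (simp_all add: gen_base)
  consider "k = 0" | "k = 1" | "k = 2" using k by linarith
  thus "dz k \<in> Galg" using g by cases (simp_all add: D_dz)
  consider "k = 0" | "k = 1" | "k = 2" using k by linarith
  thus "dzb k \<in> Galg" using g by cases (simp_all add: E_dzb)
qed

lemma M_dz:
  assumes k: "k \<le> 2" and V: "Mset V"
  shows "Mset (dz k V)" "Mset (dzb k V)"
proof -
  have smV: "sm V" and GV: "GE (mult_op V)" using V unfolding Mset_def by blast+
  have g1: "GE (\<lambda>f. dz k (mult_op V f))" by (rule GE_comp[OF GE_of[OF dz_Galg(1)[OF k]] GV])
  have g2: "GE (\<lambda>f. mult_op V (dz k f))" by (rule GE_comp[OF GV GE_of[OF dz_Galg(1)[OF k]]])
  have "GE (\<lambda>f z. dz k (mult_op V f) z + (-1) * mult_op V (dz k f) z)"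
    by (rule GE_add[OF g1 GE_scale[OF g2]])
  moreover have "mult_op (dz k V) f z = dz k (mult_op V f) z + (-1) * mult_op V (dz k f) z"
    if f: "sm f" and z: "z \<in> Lambda" for f z
    using dz_leibniz(1)[OF smV f z, of k] by (simp add: mult_op_def)
  ultimately have "GE (mult_op (dz k V))" by (rule GE_ext)
  thus "Mset (dz k V)" unfolding Mset_def using sm_dz[OF smV] by blast
  have g3: "GE (\<lambda>f. dzb k (mult_op V f))" by (rule GE_comp[OF GE_of[OF dz_Galg(2)[OF k]] GV])
  have g4: "GE (\<lambda>f. mult_op V (dzb k f))" by (rule GE_comp[OF GV GE_of[OF dz_Galg(2)[OF k]]])
  have "GE (\<lambda>f z. dzb k (mult_op V f) z + (-1) * mult_op V (dzb k f) z)"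
    by (rule GE_add[OF g3 GE_scale[OF g4]])
  moreover have "mult_op (dzb k V) f z = dzb k (mult_op V f) z + (-1) * mult_op V (dzb k f) z"
    if f: "sm f" and z: "z \<in> Lambda" for f z
    using dz_leibniz(2)[OF smV f z, of k] by (simp add: mult_op_def)
  ultimately have "GE (mult_op (dzb k V))" by (rule GE_ext)
  thus "Mset (dzb k V)" unfolding Mset_def using sm_dzb[OF smV] by blast
qed


lemma a_eq:
  assumes z: "z \<in> Lambda"
  shows "m 1 0 1 z = (1/2) * ((-1) * dz 2 uu z + (-1) * dzb 2 uu z + 1)"
proof -
  have ne: "z - cnj z \<noteq> 0" by (rule Lambda_ne[OF z])
  have e1: "dz 2 uu z = - (z^2 * uu z ^ 2)" by (simp add: dz_def wirt_uu(1)[OF ne])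
  have e2: "dzb 2 uu z = cnj z ^ 2 * uu z ^ 2" by (simp add: dzb_def wirt_uu(2)[OF ne])
  have du: "(z - cnj z) * uu z = 1" using ne by (simp add: uu_def)
  have "2 * (z * uu z) = (z + cnj z) * uu z + (z - cnj z) * uu z" by (simp add: algebra_simps)
  also have "\<dots> = (z + cnj z) * ((z - cnj z) * uu z) * uu z + 1" by (simp only: du mult_1_right)
  also have "\<dots> = z^2 * uu z ^ 2 - cnj z ^ 2 * uu z ^ 2 + 1" by (simp add: power2_eq_square algebra_simps)
  finally have "z * uu z = (1/2) * (z^2 * uu z ^ 2 - cnj z ^ 2 * uu z ^ 2 + 1)" by (simp add: mult.commute)
  moreover have "m 1 0 1 z = z * uu z" by (simp add: m_def uu_def)
  ultimately show ?thesis unfolding e1 e2 by simp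
qed

lemma M_a: "Mset (m 1 0 1)"
proof -
  have u1: "Mset (\<lambda>z. (-1) * dz 2 uu z)" by (rule M_cmult[OF M_dz(1)[OF _ M_uu]]) simp
  have u2: "Mset (\<lambda>z. (-1) * dzb 2 uu z)" by (rule M_cmult[OF M_dz(2)[OF _ M_uu]]) simp
  have "Mset (\<lambda>z. (-1) * dz 2 uu z + (-1) * dzb 2 uu z)" by (rule M_add[OF u1 u2])
  hence "Mset (\<lambda>z. ((-1) * dz 2 uu z + (-1) * dzb 2 uu z) + 1)" by (rule M_add[OF _ M_one])
  hence "Mset (\<lambda>z. (1/2) * ((-1) * dz 2 uu z + (-1) * dzb 2 uu z + 1))" by (rule M_cmult)
  thus ?thesis by (rule M_local) (rule a_eq)
qed

lemma M_b: "Mset (m 0 1 1)"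
proof -
  have "Mset (\<lambda>z. m 1 0 1 z + (-1) * 1)" by (rule M_add[OF M_a M_cmult[OF M_one]])
  moreover have "m 0 1 1 z = m 1 0 1 z + (-1) * 1" if z: "z \<in> Lambda" for z
  proof -
    have h: "m 0 0 0 z = m (Suc 0) 0 (Suc 0) z - m 0 (Suc 0) (Suc 0) z" by (rule m_shift[OF z])
    have h1: "m 0 0 0 z = 1" by (simp add: m_def)
    have "m 0 1 1 z = m 1 0 1 z - (m 1 0 1 z - m 0 1 1 z)" by simp
    also have "\<dots> = m 1 0 1 z - m 0 0 0 z" using h by simp
    also have "\<dots> = m 1 0 1 z + (-1) * 1" using h1 by simp
    finally show ?thesis .
  qed
  ultimately show ?thesis by (rule M_local)
qed

lemma M_P: "Mset (m (Suc k) k (Suc k))"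
proof (induction k)
  case 0 thus ?case using M_a by simp
next
  case (Suc k)
  have "Mset (\<lambda>z. (- 1 / of_nat (Suc k)) * dz 2 (m (Suc k) k (Suc k)) z)"
    by (rule M_cmult[OF M_dz(1)[OF _ Suc.IH]]) simp
  moreover have "m (Suc (Suc k)) (Suc k) (Suc (Suc k)) z = (- 1 / of_nat (Suc k)) * dz 2 (m (Suc k) k (Suc k)) z"
    if z: "z \<in> Lambda" for z
  proof -
    have "dz 2 (m (Suc k) k (Suc k)) z = - (of_nat (Suc k) * m (Suc (Suc k)) (Suc k) (Suc (Suc k)) z)"
      using dz2_m[OF z, of "Suc k" k "Suc k"] by simp
    thus ?thesis by (simp del: of_nat_Suc)
  qed
  ultimately show ?case by (rule M_local)
qed

lemma M_Q: "Mset (m k (Suc k) (Suc k))"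
proof (induction k)
  case 0 thus ?case using M_b by simp
next
  case (Suc k)
  have "Mset (\<lambda>z. (1 / of_nat (Suc k)) * dzb 2 (m k (Suc k) (Suc k)) z)"
    by (rule M_cmult[OF M_dz(2)[OF _ Suc.IH]]) simp
  moreover have "m (Suc k) (Suc (Suc k)) (Suc (Suc k)) z = (1 / of_nat (Suc k)) * dzb 2 (m k (Suc k) (Suc k)) z"
    if z: "z \<in> Lambda" for z
  proof -
    have "dzb 2 (m k (Suc k) (Suc k)) z = of_nat (Suc k) * m (Suc k) (Suc (Suc k)) (Suc (Suc k)) z"
      using dzb2_m[OF z, of k "Suc k" "Suc k"] by simp
    thus ?thesis by (simp del: of_nat_Suc)
  qed
  ultimately show ?case by (rule M_local)
qed

lemma Omega_decomp:
  assumes pq: "(p, q) \<in> Omega n" and n: "n \<ge> 2"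
    and nP: "\<not> (p = n \<and> q = n - 1)" and nQ: "\<not> (p = n - 1 \<and> q = n)"
  shows "\<exists>p1 q1. (p1, q1) \<in> Omega 1 \<and> p1 \<le> p \<and> q1 \<le> q \<and> (p - p1, q - q1) \<in> Omega (n - 1)"
proof -
  define p1 :: nat where "p1 = (if p = n \<or> (p = n - 1 \<and> q = n - 1) then 1 else 0)"
  define q1 :: nat where "q1 = (if q = n then 1 else 0)"
  have "(p1, q1) \<in> Omega 1 \<and> p1 \<le> p \<and> q1 \<le> q \<and> (p - p1, q - q1) \<in> Omega (n - 1)"
    using pq n nP nQ unfolding Omega_def p1_def q1_def by auto
  thus ?thesis by blast
qed

lemma M_m: "(p, q) \<in> Omega n \<Longrightarrow> Mset (m p q n)"
proof (induction n arbitrary: p q rule: less_induct)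
  case (less n)
  consider "n = 0" | "n = 1" | "n \<ge> 2" by linarith
  thus ?case
  proof cases
    case 1 thus ?thesis using less.prems by (auto simp: Omega_def)
  next
    case 2
    hence "(p, q) = (0, 0) \<or> (p, q) = (1, 0) \<or> (p, q) = (0, 1)" using less.prems by (auto simp: Omega_def)
    thus ?thesis using 2 M_a M_b M_uu uu_m by auto
  next
    case 3
    show ?thesis
    proof (cases "p = n \<and> q = n - 1")
      case True
      obtain k where k: "n = Suc k" using 3 by (cases n) auto
      show ?thesis using True M_P[of k] k by simp
    next
      case nP: False
      show ?thesis
      proof (cases "p = n - 1 \<and> q = n")
        case True
        obtain k where k: "n = Suc k" using 3 by (cases n) auto
        show ?thesis using True M_Q[of k] k by simp
      next
        case nQ: False
        obtain p1 q1 where d: "(p1, q1) \<in> Omega 1" "p1 \<le> p" "q1 \<le> q" "(p - p1, q - q1) \<in> Omega (n - 1)"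
          using Omega_decomp[OF less.prems 3 nP nQ] by blast
        have "Mset (m p1 q1 1)" using less.IH[of 1 p1 q1] 3 d(1) by simp
        moreover have "Mset (m (p - p1) (q - q1) (n - 1))" using less.IH[of "n - 1"] 3 d(4) by simp
        ultimately have "Mset (\<lambda>z. m p1 q1 1 z * m (p - p1) (q - q1) (n - 1) z)" by (rule M_mult)
        moreover have "(\<lambda>z. m p1 q1 1 z * m (p - p1) (q - q1) (n - 1) z) = m p q n"
          using d(2,3) 3 by (simp add: m_mult fun_eq_iff)
        ultimately show ?thesis by simp
      qed
    qed
  qed
qed

lemma M_zero: "Mset (\<lambda>_. 0)"
  using M_cmult[OF M_one, of 0] by simp

lemma M_sum: "finite I \<Longrightarrow> (\<And>i. i \<in> I \<Longrightarrow> Mset (f i)) \<Longrightarrow> Mset (\<lambda>z. \<Sum>i\<in>I. f i z)"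
proof (induction I rule: finite_induct)
  case empty thus ?case using M_zero by simp
next
  case (insert j F)
  have "Mset (\<lambda>z. f j z + (\<Sum>i\<in>F. f i z))"
    by (rule M_add) (use insert in auto)
  thus ?case using insert(1,2) by simp
qed

lemma M_AL: "AL V \<Longrightarrow> Mset V"
proof -
  assume "AL V"
  then obtain W where W: "W \<in> A_all" "\<forall>z\<in>Lambda. V z = W z" unfolding AL_def by blast
  obtain N c where Wc: "W = (\<lambda>z. \<Sum>n\<le>N. \<Sum>x\<in>Omega n. c n x * m (fst x) (snd x) n z)"
    using A_all_An_sum[OF W(1)] by blast
  have "Mset W" unfolding Wc
  proof (intro M_sum finite_atMost finite_Omega)
    fix n x assume "x \<in> Omega n"
    hence "(fst x, snd x) \<in> Omega n" by simp
    thus "Mset (\<lambda>z. c n x * m (fst x) (snd x) n z)" by (intro M_cmult M_m)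
  qed
  thus "Mset V" by (rule M_local) (use W(2) in simp)
qed

lemma GE_Bp: "Bp L \<Longrightarrow> GE L"
proof -
  assume "Bp L"
  then obtain S V where A: "finite S" "\<forall>t. AL (V t)" "opeq L (NF S V)" unfolding Bp_def by blast
  have "GE (\<lambda>f z. \<Sum>t\<in>S. V t z * mono_op t f z)"
  proof (rule GE_sum[OF A(1)])
    fix t
    have "AL (V t)" using A(2) by blast
    hence "GE (mult_op (V t))" using M_AL unfolding Mset_def by blast
    hence "GE (\<lambda>f. mult_op (V t) (mono_op t f))" by (rule GE_comp[OF _ GE_of[OF mono_Galg]])
    thus "GE (\<lambda>f z. V t z * mono_op t f z)" by (simp add: mult_op_def)
  qed
  thus "GE L" by (rule GE_ext) (use A(3) in \<open>simp add: opeq_def NF_def\<close>)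
qed

definition t0 :: idx where "t0 = (0, 0, 0, 0, 0, 0)"

lemma mono_t0: "mono_op t0 f = f"
  by (simp add: t0_def mono_op_def)

lemma Bp_id: "Bp (\<lambda>f. f)"
  by (rule Bp_ext[OF Bp_mono[OF AL_one, of t0]]) (simp add: mono_t0)

lemma Bp_Galg: "M \<in> Galg \<Longrightarrow> Bp M"
proof (induction rule: gen_alg.induct)
  case gen_id thus ?case by (rule Bp_id)
next
  case (gen_base g)
  have k: "(0::nat) \<le> 2" "(1::nat) \<le> 2" "(2::nat) \<le> 2" by simp_all
  have d: "Bp (dz k)" "Bp (dzb k)" if "k \<le> 2" for k
    using Bp_dz[OF that Bp_id] Bp_dzb[OF that Bp_id] by simp_all
  have i: "Bp inv_diff"
    by (rule Bp_ext[OF Bp_mono[OF AL_uu, of t0]]) (simp add: mono_t0 inv_diff_uu mult_op_def)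
  show ?case using gen_base i d[OF k(1)] d[OF k(2)] d[OF k(3)] by (auto simp: D_dz E_dzb)
next
  case (gen_add L M)
  have "op_add L M = (\<lambda>f z. L f z + M f z)" by (simp add: op_add_def fun_eq_iff)
  thus ?case using Bp_add[OF gen_add.IH] by simp
next
  case (gen_scale L c)
  have "op_scale c L = (\<lambda>f z. c * L f z)" by (simp add: op_scale_def fun_eq_iff)
  thus ?case using Bp_scale[OF gen_scale.IH] by simp
next
  case (gen_comp L M) show ?case by (rule Bp_comp[OF gen_comp.IH])
qed

lemma B_ops_Bp: "L \<in> B_ops \<longleftrightarrow> Bp L"
proof
  assume "L \<in> B_ops"
  then obtain S V where A: "finite S" "\<forall>t\<in>S. V t \<in> A_all"
      "op_eq L (\<lambda>f z. \<Sum>t\<in>S. V t z * mono_op t f z)"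
    unfolding B_ops_def by blast
  define V' where "V' t = (if t \<in> S then V t else (\<lambda>_. 0))" for t
  have "\<forall>t. AL (V' t)" using A(2) AL_zero AL_of_A_all by (simp add: V'_def)
  moreover have "opeq L (NF S V')"
    using A(3) unfolding op_eq_opeq opeq_def NF_def V'_def by simp
  ultimately show "Bp L" unfolding Bp_def using A(1) by blast
next
  assume "Bp L"
  then obtain S V where A: "finite S" "\<forall>t. AL (V t)" "opeq L (NF S V)" unfolding Bp_def by blast
  have "\<forall>t. \<exists>W. W \<in> A_all \<and> (\<forall>z\<in>Lambda. V t z = W z)" using A(2) unfolding AL_def by blast
  then obtain W where W: "\<forall>t. W t \<in> A_all \<and> (\<forall>z\<in>Lambda. V t z = W t z)"
    using choice[of "\<lambda>t W. W \<in> A_all \<and> (\<forall>z\<in>Lambda. V t z = W z)"] by blast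
  have "op_eq L (\<lambda>f z. \<Sum>t\<in>S. W t z * mono_op t f z)"
    using A(3) W unfolding op_eq_opeq opeq_def NF_def by simp
  thus "L \<in> B_ops" unfolding B_ops_def using A(1) W by blast
qed

theorem theorem2:
  shows "(\<lambda>f. f) \<in> B_ops
    \<and> (\<forall>L\<in>B_ops. \<forall>M\<in>B_ops. op_add L M \<in> B_ops)
    \<and> (\<forall>c. \<forall>L\<in>B_ops. op_scale c L \<in> B_ops)
    \<and> (\<forall>L\<in>B_ops. \<forall>M\<in>B_ops. op_comp L M \<in> B_ops)
    \<and> B_ops = {L. \<exists>M\<in>gen_alg {inv_diff, D1, D2, D3, E1, E2, E3}. op_eq L M}"
proof (intro conjI ballI allI)
  show "(\<lambda>f. f) \<in> B_ops" unfolding B_ops_Bp by (rule Bp_id)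
next
  fix L M assume "L \<in> B_ops" "M \<in> B_ops"
  hence "Bp L" "Bp M" unfolding B_ops_Bp by blast+
  moreover have "op_add L M = (\<lambda>f z. L f z + M f z)" by (simp add: op_add_def fun_eq_iff)
  ultimately show "op_add L M \<in> B_ops" unfolding B_ops_Bp using Bp_add by simp
next
  fix c L assume "L \<in> B_ops"
  hence "Bp L" unfolding B_ops_Bp by blast
  moreover have "op_scale c L = (\<lambda>f z. c * L f z)" by (simp add: op_scale_def fun_eq_iff)
  ultimately show "op_scale c L \<in> B_ops" unfolding B_ops_Bp using Bp_scale by simp
next
  fix L M assume "L \<in> B_ops" "M \<in> B_ops"
  hence "Bp L" "Bp M" unfolding B_ops_Bp by blast+
  thus "op_comp L M \<in> B_ops" unfolding B_ops_Bp by (rule Bp_comp)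
next
  show "B_ops = {L. \<exists>M\<in>gen_alg {inv_diff, D1, D2, D3, E1, E2, E3}. op_eq L M}"
  proof (intro set_eqI iffI)
    fix L assume "L \<in> B_ops"
    hence "GE L" unfolding B_ops_Bp by (rule GE_Bp)
    thus "L \<in> {L. \<exists>M\<in>gen_alg {inv_diff, D1, D2, D3, E1, E2, E3}. op_eq L M}"
      unfolding GE_def op_eq_opeq by blast
  next
    fix L assume "L \<in> {L. \<exists>M\<in>gen_alg {inv_diff, D1, D2, D3, E1, E2, E3}. op_eq L M}"
    then obtain M where M: "M \<in> Galg" "opeq L M" unfolding op_eq_opeq by blast
    have "Bp L" by (rule Bp_ext[OF Bp_Galg[OF M(1)]]) (use M(2) in \<open>simp add: opeq_def\<close>)
    thus "L \<in> B_ops" unfolding B_ops_Bp .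
  qed
qed


end
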